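(* Let $I\subset\mathbb R$ be an open interval, let $f:I\to\mathbb R$ be continuous and bounded from below, and let $g:\mathrm{Im}(f)\to\mathbb R$ be continuous. The following are equivalent: (1) $f''\le g(f)$ in the viscosity sense on $I$, i.e., for every $x\in I$ and every smooth $\varphi$ defined in a neighborhood of $x$ such that $\varphi-f$ has a local maximum at $x$, one has $\varphi''(x)\le g(f(x))$; (2) $f''\le g(f)$ in the sense of distributions on $I$, i.e., $\int f\varphi''\,dx\le\int g(f)\varphi\,dx$ for every $\varphi\in C^\infty_c(I)$ with $\varphi\ge0$; (3) $\overline D^2f(x)\le g(f(x))$ for every $x\in I$.
   Context: $\overline D^2f(x)=\limsup_{h\to0^+}\frac{f(x+h)+f(x-h)-2f(x)}{h^2}$. *)

theory Defs
  imports "HOL-Analysis.Analysis" "HOL-Library.Liminf_Limsup"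
begin

definition smooth_on :: "real set \<Rightarrow> (real \<Rightarrow> real) \<Rightarrow> bool" where
  "smooth_on U \<phi> \<longleftrightarrow> (\<forall>n. \<forall>x\<in>U. ((deriv ^^ n) \<phi>) differentiable (at x))"

definition visc_super :: "real set \<Rightarrow> (real \<Rightarrow> real) \<Rightarrow> (real \<Rightarrow> real) \<Rightarrow> bool" where
  "visc_super I f g \<longleftrightarrow>
     (\<forall>x\<in>I. \<forall>\<phi> U. open U \<and> x \<in> U \<and> smooth_on U \<phi> \<and>
        (\<exists>e>0. \<forall>y\<in>U. \<bar>y - x\<bar> < e \<longrightarrow> \<phi> y - f y \<le> \<phi> x - f x)
        \<longrightarrow> deriv (deriv \<phi>) x \<le> g (f x))"

definition test_fun :: "real set \<Rightarrow> (real \<Rightarrow> real) \<Rightarrow> bool" where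
  "test_fun I \<phi> \<longleftrightarrow> smooth_on UNIV \<phi> \<and> compact (closure {x. \<phi> x \<noteq> 0})
      \<and> closure {x. \<phi> x \<noteq> 0} \<subseteq> I"

definition distr_super :: "real set \<Rightarrow> (real \<Rightarrow> real) \<Rightarrow> (real \<Rightarrow> real) \<Rightarrow> bool" where
  "distr_super I f g \<longleftrightarrow>
     (\<forall>\<phi>. test_fun I \<phi> \<and> (\<forall>x. \<phi> x \<ge> 0) \<longrightarrow>
        integral I (\<lambda>x. f x * deriv (deriv \<phi>) x) \<le> integral I (\<lambda>x. g (f x) * \<phi> x))"

definition upper_D2 :: "(real \<Rightarrow> real) \<Rightarrow> real \<Rightarrow> ereal" where
  "upper_D2 f x = Limsup (at_right 0) (\<lambda>h. ereal ((f (x + h) + f (x - h) - 2 * f x) / h\<^sup>2))"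

end

theory Submission
  imports Defs "HOL-Computational_Algebra.Polynomial"
begin

lemma smooth_seq:
  fixes F :: "real \<Rightarrow> real" and D :: "nat \<Rightarrow> real \<Rightarrow> real"
  assumes "D 0 = F" "\<And>n x. (D n has_real_derivative D (Suc n) x) (at x)"
  shows "(deriv ^^ n) F = D n"
proof (induction n)
  case 0 then show ?case using assms by simp
next
  case (Suc n)
  show ?case by (rule ext) (simp add: Suc DERIV_imp_deriv[OF assms(2)])
qed

lemma smooth_seqI:
  fixes F :: "real \<Rightarrow> real" and D :: "nat \<Rightarrow> real \<Rightarrow> real"
  assumes "D 0 = F" "\<And>n x. (D n has_real_derivative D (Suc n) x) (at x)"
  shows "smooth_on U F"
  unfolding smooth_on_def smooth_seq[OF assms]
  using assms(2) real_differentiable_def by blast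

lemma smooth_D:
  assumes "smooth_on U \<phi>" "x \<in> U"
  shows "(\<phi> has_real_derivative deriv \<phi> x) (at x)"
    "(deriv \<phi> has_real_derivative deriv (deriv \<phi>) x) (at x)"
    "isCont (deriv (deriv \<phi>)) x"
proof -
  have "\<And>n. ((deriv ^^ n) \<phi>) differentiable (at x)" using assms unfolding smooth_on_def by blast
  from this[of 0] this[of 1] this[of 2]
  have a: "\<phi> differentiable (at x)" and b: "deriv \<phi> differentiable (at x)"
   and c: "deriv (deriv \<phi>) differentiable (at x)"
    by (simp_all add: numeral_2_eq_2)
  show "(\<phi> has_real_derivative deriv \<phi> x) (at x)" using a DERIV_deriv_iff_real_differentiable by blast
  show "(deriv \<phi> has_real_derivative deriv (deriv \<phi>) x) (at x)" using b DERIV_deriv_iff_real_differentiable by blast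
  show "isCont (deriv (deriv \<phi>)) x" using c differentiable_imp_continuous_within by blast
qed

lemma second_diff_mvt:
  fixes \<phi> \<phi>1 \<phi>2 :: "real \<Rightarrow> real"
  assumes h: "h > 0" and d1: "\<And>t. \<bar>t - y\<bar> \<le> h \<Longrightarrow> (\<phi> has_real_derivative \<phi>1 t) (at t)"
    and d2: "\<And>t. \<bar>t - y\<bar> \<le> h \<Longrightarrow> (\<phi>1 has_real_derivative \<phi>2 t) (at t)"
  shows "\<exists>\<xi>. \<bar>\<xi> - y\<bar> < h \<and> \<phi> (y+h) + \<phi> (y-h) - 2*\<phi> y = h^2 * \<phi>2 \<xi>"
proof -
  define G where "G s = \<phi> (y+s) + \<phi> (y-s) - 2*\<phi> y" for s
  have dG: "(G has_real_derivative (\<phi>1 (y+s) - \<phi>1 (y-s))) (at s)" if "0 \<le> s" "s \<le> h" for s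
  proof -
    have "((\<lambda>s. \<phi> (y+s)) has_real_derivative \<phi>1 (y+s) * 1) (at s)"
      by (rule DERIV_chain2[OF d1]) (use that in \<open>auto intro!: derivative_eq_intros\<close>)
    moreover have "((\<lambda>s. \<phi> (y-s)) has_real_derivative \<phi>1 (y-s) * (-1)) (at s)"
      by (rule DERIV_chain2[OF d1]) (use that in \<open>auto intro!: derivative_eq_intros\<close>)
    ultimately show ?thesis unfolding G_def by (auto intro!: derivative_eq_intros)
  qed
  have dQ: "((\<lambda>u. u^2) has_real_derivative 2 * s) (at s)" for s :: real
    by (auto intro!: derivative_eq_intros)
  obtain c where c: "0 < c" "c < h" "(G h - G 0) * (2*c) = (h^2 - 0^2) * (\<phi>1 (y+c) - \<phi>1 (y-c))"
    using GMVT'[of 0 h G "\<lambda>u. u^2" "\<lambda>u. 2*u" "\<lambda>s. \<phi>1 (y+s) - \<phi>1 (y-s)"] h dG dQ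
    by (force intro: DERIV_isCont)
  obtain z where z: "y - c < z" "z < y + c" "\<phi>1 (y+c) - \<phi>1 (y-c) = ((y+c) - (y-c)) * \<phi>2 z"
    using MVT2[of "y-c" "y+c" \<phi>1 \<phi>2] d2 c by force
  have "G h * (2*c) = h^2 * (2*c) * \<phi>2 z" using c z by (simp add: G_def)
  then have "G h = h^2 * \<phi>2 z" using c by simp
  then show ?thesis using z c unfolding G_def by (intro exI[of _ z]) auto
qed

lemma touch:
  fixes f :: "real \<Rightarrow> real"
  assumes h: "h>0" and cf: "continuous_on {c-h..c+h} f" and gt: "f(c+h)+f(c-h)-2*f c > M*h^2"
  shows "\<exists>x0 p q. c-h < x0 \<and> x0 < c+h \<and> (\<forall>y\<in>{c-h..c+h}. M/2*y^2 + p*y + q \<le> f y) \<and> M/2*x0^2+p*x0+q = f x0"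
proof -
  define u where "u y = f y - M/2*(y-c)^2" for y
  define s where "s = (u (c+h) - u (c-h))/(2*h)"
  have s2: "s*(2*h) = u (c+h) - u (c-h)" unfolding s_def using h by simp
  define w where "w y = u y - (u (c-h) + s*(y-(c-h)))" for y
  have cw: "continuous_on {c-h..c+h} w" unfolding w_def u_def
    by (intro continuous_intros cf)
  obtain x0 where x0: "x0 \<in> {c-h..c+h}" "\<And>y. y \<in> {c-h..c+h} \<Longrightarrow> w x0 \<le> w y"
    using continuous_attains_inf[OF compact_Icc _ cw] h by auto
  have wa: "w (c-h) = 0" unfolding w_def by simp
  have wb: "w (c+h) = 0" unfolding w_def using s2 by (simp add: algebra_simps)
  have "2 * w c = 2*u c - 2*u (c-h) - s*(2*h)" unfolding w_def by (simp add: algebra_simps)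
  also have "\<dots> = -(f(c+h)+f(c-h)-2*f c - M*h^2)" unfolding s2 unfolding u_def
    by (simp add: algebra_simps power2_eq_square)
  finally have wc: "2 * w c = -(f(c+h)+f(c-h)-2*f c - M*h^2)" .
  have "w x0 < 0" using x0(2)[of c] wc gt h by simp
  then have x0i: "c-h < x0" "x0 < c+h" using x0 wa wb by (auto simp: less_eq_real_def)
  define p where "p = -M*c + s"
  define q where "q = M*c^2/2 + u (c-h) - s*(c-h) + w x0"
  have eq: "M/2*y^2 + p*y + q = f y - (w y - w x0)" for y
    unfolding p_def q_def
    by (simp add: w_def u_def algebra_simps power2_eq_square)
  show ?thesis
    by (rule exI[of _ x0], rule exI[of _ p], rule exI[of _ q]) (use x0i x0 eq in auto)
qed

definition Pprop :: "real set \<Rightarrow> (real\<Rightarrow>real) \<Rightarrow> (real\<Rightarrow>real) \<Rightarrow> bool" where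
  "Pprop I f k \<longleftrightarrow> (\<forall>c h M. h > 0 \<and> {c-h..c+h} \<subseteq> I \<and> (\<forall>y\<in>{c-h..c+h}. k y < M)
      \<longrightarrow> f(c+h)+f(c-h)-2*f c \<le> M*h^2)"

lemma loc:
  fixes k :: "real \<Rightarrow> real"
  assumes "open I" "continuous_on I k" "x \<in> I" "\<epsilon> > 0"
  shows "\<exists>r>0. ball x r \<subseteq> I \<and> (\<forall>y. \<bar>y - x\<bar> < r \<longrightarrow> \<bar>k y - k x\<bar> < \<epsilon>)"
proof -
  obtain r1 where r1: "r1 > 0" "ball x r1 \<subseteq> I" using assms open_contains_ball by blast
  obtain d where d: "d > 0" "\<forall>x'\<in>I. dist x' x < d \<longrightarrow> dist (k x') (k x) < \<epsilon>"
    using assms(2,3,4) unfolding continuous_on_iff by blast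
  show ?thesis
  proof (intro exI[of _ "min r1 d"] conjI allI impI)
    show "0 < min r1 d" using r1 d by simp
    show "ball x (min r1 d) \<subseteq> I" using r1 by auto
    fix y assume "\<bar>y - x\<bar> < min r1 d"
    then have "y \<in> I" "dist y x < d" using r1 by (auto simp: dist_real_def ball_def)
    then show "\<bar>k y - k x\<bar> < \<epsilon>" using d by (auto simp: dist_real_def)
  qed
qed

lemma quad_smooth:
  fixes a b c :: real
  shows "smooth_on U (\<lambda>y. a*y^2 + b*y + c)" "deriv (deriv (\<lambda>y. a*y^2 + b*y + c)) x = 2*a"
proof -
  define D :: "nat \<Rightarrow> real \<Rightarrow> real" where "D n = (case n of 0 \<Rightarrow> (\<lambda>y. a*y^2 + b*y + c)
     | Suc 0 \<Rightarrow> (\<lambda>y. 2*a*y + b) | Suc (Suc 0) \<Rightarrow> (\<lambda>_. 2*a) | _ \<Rightarrow> (\<lambda>_. 0))" for n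
  have D0: "D 0 = (\<lambda>y. a*y^2 + b*y + c)" by (simp add: D_def)
  have Dd: "(D n has_real_derivative D (Suc n) x) (at x)" for n x
  proof (cases n)
    case 0 then show ?thesis by (auto simp: D_def intro!: derivative_eq_intros)
  next
    case (Suc m) then show ?thesis
      by (cases m) (auto simp: D_def intro!: derivative_eq_intros split: nat.split)
  qed
  show "smooth_on U (\<lambda>y. a*y^2 + b*y + c)" by (rule smooth_seqI[OF D0 Dd])
  have "(deriv ^^ 2) (\<lambda>y. a*y^2 + b*y + c) = D 2" by (rule smooth_seq[OF D0 Dd])
  then show "deriv (deriv (\<lambda>y. a*y^2 + b*y + c)) x = 2*a"
    by (simp add: numeral_2_eq_2 D_def)
qed

lemma visc_P:
  fixes f g :: "real \<Rightarrow> real"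
  assumes V: "visc_super I f g" and cf: "continuous_on I f"
  shows "Pprop I f (\<lambda>x. g (f x))"
  unfolding Pprop_def
proof (intro allI impI, elim conjE, rule ccontr)
  fix c h M assume h: "h > 0" and sub: "{c-h..c+h} \<subseteq> I" and kM: "\<forall>y\<in>{c-h..c+h}. g (f y) < M"
    and nle: "\<not> f(c+h)+f(c-h)-2*f c \<le> M*h^2"
  obtain x0 p q where x0: "c-h < x0" "x0 < c+h" and below: "\<forall>y\<in>{c-h..c+h}. M/2*y^2 + p*y + q \<le> f y"
    and eq: "M/2*x0^2+p*x0+q = f x0"
    using touch[OF h continuous_on_subset[OF cf sub]] nle by force
  define \<phi> where "\<phi> = (\<lambda>y. (M/2)*y^2 + p*y + q)"
  have x0I: "x0 \<in> I" using sub x0 by auto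
  have pre: "open {c-h<..<c+h} \<and> x0 \<in> {c-h<..<c+h} \<and> smooth_on {c-h<..<c+h} \<phi> \<and>
      (\<exists>e>0. \<forall>y\<in>{c-h<..<c+h}. \<bar>y - x0\<bar> < e \<longrightarrow> \<phi> y - f y \<le> \<phi> x0 - f x0)"
  proof -
    have "smooth_on {c-h<..<c+h} \<phi>" unfolding \<phi>_def by (rule quad_smooth(1))
    moreover have "\<forall>y\<in>{c-h<..<c+h}. \<bar>y - x0\<bar> < 1 \<longrightarrow> \<phi> y - f y \<le> \<phi> x0 - f x0"
    proof (intro ballI impI)
      fix y assume "y \<in> {c-h<..<c+h}"
      then have "\<phi> y \<le> f y" using below unfolding \<phi>_def by auto
      moreover have "\<phi> x0 = f x0" using eq unfolding \<phi>_def by simp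
      ultimately show "\<phi> y - f y \<le> \<phi> x0 - f x0" by simp
    qed
    ultimately show ?thesis using x0 by (intro conjI exI[of _ 1]) auto
  qed
  have "deriv (deriv \<phi>) x0 \<le> g (f x0)"
    using V x0I pre unfolding visc_super_def by blast
  moreover have "deriv (deriv \<phi>) x0 = M" unfolding \<phi>_def quad_smooth(2) by simp
  moreover have "g (f x0) < M" using kM x0 by auto
  ultimately show False by simp
qed

lemma D3_P:
  fixes f k :: "real \<Rightarrow> real"
  assumes D: "\<forall>x\<in>I. upper_D2 f x \<le> ereal (k x)" and cf: "continuous_on I f"
  shows "Pprop I f k"
  unfolding Pprop_def
proof (intro allI impI, elim conjE, rule ccontr)
  fix c h M assume h: "h > 0" and sub: "{c-h..c+h} \<subseteq> I" and kM: "\<forall>y\<in>{c-h..c+h}. k y < M"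
    and nle: "\<not> f(c+h)+f(c-h)-2*f c \<le> M*h^2"
  obtain x0 p q where x0: "c-h < x0" "x0 < c+h" and below: "\<forall>y\<in>{c-h..c+h}. M/2*y^2 + p*y + q \<le> f y"
    and eq: "M/2*x0^2+p*x0+q = f x0"
    using touch[OF h continuous_on_subset[OF cf sub]] nle by force
  have x0I: "x0 \<in> I" using sub x0 by auto
  have "k x0 < M" using kM x0 by auto
  have "upper_D2 f x0 \<le> ereal (k x0)" using D x0I by blast
  moreover have "ereal (k x0) < ereal M" using \<open>k x0 < M\<close> by simp
  ultimately have "upper_D2 f x0 < ereal M" by (rule order.strict_trans1)
  then have ev1: "eventually (\<lambda>t. ereal ((f (x0 + t) + f (x0 - t) - 2 * f x0) / t\<^sup>2) < ereal M) (at_right 0)"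
    unfolding upper_D2_def by (rule Limsup_lessD)
  have ev2: "eventually (\<lambda>t. 0 < t \<and> t < min (x0 - (c-h)) (c+h-x0)) (at_right 0)"
    unfolding eventually_at_right_field using x0 by (intro exI[of _ "min (x0 - (c-h)) (c+h-x0)"]) auto
  have "eventually (\<lambda>t::real. False) (at_right 0)"
    using ev1 ev2
  proof eventually_elim
    case (elim t)
    then have t: "0 < t" "x0 + t \<in> {c-h..c+h}" "x0 - t \<in> {c-h..c+h}" by auto
    have "M/2*(x0+t)^2 + p*(x0+t) + q + (M/2*(x0-t)^2 + p*(x0-t) + q) - 2*(M/2*x0^2+p*x0+q)
        \<le> f (x0 + t) + f (x0 - t) - 2 * f x0"
      using below t eq by (smt (verit))
    moreover have "M/2*(x0+t)^2 + p*(x0+t) + q + (M/2*(x0-t)^2 + p*(x0-t) + q) - 2*(M/2*x0^2+p*x0+q) = M * t^2"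
      by (simp add: power2_eq_square algebra_simps)
    ultimately have "M * t^2 \<le> f (x0 + t) + f (x0 - t) - 2 * f x0" by simp
    then have "M \<le> (f (x0 + t) + f (x0 - t) - 2 * f x0) / t^2" using t by (simp add: field_simps)
    then show False using elim by simp
  qed
  then show False by simp
qed

lemma P_D3:
  fixes f k :: "real \<Rightarrow> real"
  assumes P: "Pprop I f k" and oI: "open I" and ck: "continuous_on I k" and x: "x \<in> I"
  shows "upper_D2 f x \<le> ereal (k x)"
proof (rule ereal_le_epsilon2)
  fix \<epsilon> :: real assume e: "0 < \<epsilon>"
  obtain r where r: "r > 0" "ball x r \<subseteq> I" "\<forall>y. \<bar>y - x\<bar> < r \<longrightarrow> \<bar>k y - k x\<bar> < \<epsilon>"
    using loc[OF oI ck x e] by blast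
  have "eventually (\<lambda>t. ereal ((f (x + t) + f (x - t) - 2 * f x) / t\<^sup>2) \<le> ereal (k x + \<epsilon>)) (at_right 0)"
    unfolding eventually_at_right_field
  proof (intro exI[of _ "r/2"] conjI allI impI)
    show "0 < r/2" using r by simp
    fix t :: real assume t: "0 < t" "t < r/2"
    have sub: "{x-t..x+t} \<subseteq> I" using r t by (force simp: ball_def dist_real_def)
    have "\<forall>y\<in>{x-t..x+t}. k y < k x + \<epsilon>"
    proof
      fix y assume "y \<in> {x-t..x+t}"
      then have "\<bar>y - x\<bar> < r" using t by auto
      then show "k y < k x + \<epsilon>" using r(3) by force
    qed
    then have "f(x+t)+f(x-t)-2*f x \<le> (k x + \<epsilon>)*t^2" using P sub t unfolding Pprop_def by blast
    then show "ereal ((f (x + t) + f (x - t) - 2 * f x) / t\<^sup>2) \<le> ereal (k x + \<epsilon>)"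
      using t by (simp add: field_simps)
  qed
  then have "upper_D2 f x \<le> ereal (k x + \<epsilon>)" unfolding upper_D2_def by (rule Limsup_bounded)
  then show "upper_D2 f x \<le> ereal (k x) + ereal \<epsilon>" by simp
qed

lemma P_visc:
  fixes f g :: "real \<Rightarrow> real"
  assumes P: "Pprop I f (\<lambda>x. g (f x))" and oI: "open I" and ck: "continuous_on I (\<lambda>x. g (f x))"
  shows "visc_super I f g"
  unfolding visc_super_def
proof (intro ballI allI impI, elim conjE exE)
  fix x \<phi> U e assume x: "x \<in> I" and oU: "open U" and xU: "x \<in> U" and sm: "smooth_on U \<phi>"
    and e: "e > 0" and mx: "\<forall>y\<in>U. \<bar>y - x\<bar> < e \<longrightarrow> \<phi> y - f y \<le> \<phi> x - f x"
  let ?k = "\<lambda>x. g (f x)"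
  show "deriv (deriv \<phi>) x \<le> g (f x)"
  proof (rule field_le_epsilon)
    fix \<epsilon> :: real assume \<epsilon>: "0 < \<epsilon>"
    obtain r1 where r1: "r1 > 0" "ball x r1 \<subseteq> I" "\<forall>y. \<bar>y - x\<bar> < r1 \<longrightarrow> \<bar>?k y - ?k x\<bar> < \<epsilon>"
      using loc[OF oI ck x \<epsilon>] by blast
    obtain r2 where r2: "r2 > 0" "ball x r2 \<subseteq> U" using oU xU open_contains_ball by blast
    define r where "r = min (min r1 r2) e"
    have r: "r > 0" "r \<le> r1" "r \<le> r2" "r \<le> e" using r1 r2 e by (auto simp: r_def)
    show "deriv (deriv \<phi>) x \<le> g (f x) + \<epsilon>"
    proof (rule ccontr)
      assume "\<not> ?thesis"
      then have gap: "deriv (deriv \<phi>) x - (g (f x) + \<epsilon>) > 0" by simp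
      have "isCont (deriv (deriv \<phi>)) x" using smooth_D(3)[OF sm xU] .
      then have "\<forall>r>0. \<exists>s>0. \<forall>y. y \<noteq> x \<and> norm (y - x) < s \<longrightarrow> norm (deriv (deriv \<phi>) y - deriv (deriv \<phi>) x) < r"
        unfolding isCont_def LIM_eq .
      then obtain d where d: "d > 0" "\<And>y. y \<noteq> x \<Longrightarrow> \<bar>y - x\<bar> < d \<Longrightarrow> \<bar>deriv (deriv \<phi>) y - deriv (deriv \<phi>) x\<bar> < deriv (deriv \<phi>) x - (g (f x) + \<epsilon>)"
        using gap by (metis real_norm_def)
      define t where "t = min d r / 2"
      have t: "0 < t" "t < d" "t < r" using d r by (auto simp: t_def)
      have inU: "s \<in> U" if "\<bar>s - x\<bar> \<le> t" for s using r2 r t that by (force simp: ball_def dist_real_def)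
      have inI: "s \<in> I" if "\<bar>s - x\<bar> \<le> t" for s using r1 r t that by (force simp: ball_def dist_real_def)
      obtain \<xi> where \<xi>: "\<bar>\<xi> - x\<bar> < t" "\<phi> (x+t) + \<phi> (x-t) - 2*\<phi> x = t^2 * deriv (deriv \<phi>) \<xi>"
        using second_diff_mvt[OF t(1), of x \<phi> "deriv \<phi>" "deriv (deriv \<phi>)"] smooth_D[OF sm inU] by blast
      have "x+t \<in> U" "x-t \<in> U" using inU[of "x+t"] inU[of "x-t"] t by auto
      then have "\<phi> (x+t) - f (x+t) \<le> \<phi> x - f x" "\<phi> (x-t) - f (x-t) \<le> \<phi> x - f x"
        using mx r t by auto
      then have "\<phi> (x+t) + \<phi> (x-t) - 2*\<phi> x \<le> f(x+t)+f(x-t)-2*f x" by simp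
      also have "\<dots> \<le> (?k x + \<epsilon>)*t^2"
      proof -
        have "{x-t..x+t} \<subseteq> I" using inI by auto
        moreover have "\<forall>y\<in>{x-t..x+t}. ?k y < ?k x + \<epsilon>"
        proof
          fix y assume "y \<in> {x-t..x+t}"
          then have "\<bar>y - x\<bar> < r1" using t r by auto
          then show "?k y < ?k x + \<epsilon>" using r1(3) by force
        qed
        ultimately show ?thesis using P t unfolding Pprop_def by blast
      qed
      finally have "deriv (deriv \<phi>) \<xi> \<le> ?k x + \<epsilon>" using \<xi> t by (simp add: mult.commute)
      moreover have "\<bar>\<xi> - x\<bar> < d" using \<xi> t by simp
      ultimately show False using d(2)[of \<xi>] gap by (cases "\<xi> = x") auto
    qed
  qed
qed

lemma int_superset:
  fixes F :: "real \<Rightarrow> real"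
  assumes "continuous_on {a..b} F" "\<And>y. y \<notin> {a..b} \<Longrightarrow> F y = 0" "{a..b} \<subseteq> S"
  shows "integral S F = integral {a..b} F"
proof -
  have "(F has_integral integral {a..b} F) {a..b}"
    using integrable_continuous_interval[OF assms(1)] by (simp add: integrable_integral)
  then have "(F has_integral integral {a..b} F) S"
    by (rule has_integral_on_superset) (use assms in auto)
  then show ?thesis by (rule integral_unique)
qed

lemma int_shift:
  fixes F :: "real \<Rightarrow> real"
  assumes "continuous_on {a..b} F"
  shows "integral {a-s..b-s} (\<lambda>x. F (x + s)) = integral {a..b} F"
proof -
  have "(F has_integral integral {a..b} F) (cbox a b)"
    using integrable_continuous_interval[OF assms(1)] by (simp add: integrable_integral)
  from has_integral_affinity'[OF this, of 1 s]
  have "((\<lambda>x. F (x + s)) has_integral integral {a..b} F) {a-s..b-s}" by simp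
  then show ?thesis by (rule integral_unique)
qed

lemma int_cmul:
  fixes F :: "real \<Rightarrow> real"
  shows "F integrable_on S \<Longrightarrow> (\<lambda>x. c * F x) integrable_on S"
  using integrable_cmul[of F S c] by simp

lemma eps_le:
  fixes a b C :: real
  assumes "\<And>\<epsilon>. \<epsilon> > 0 \<Longrightarrow> a \<le> b + \<epsilon> * C" "C \<ge> 0"
  shows "a \<le> b"
proof (rule field_le_epsilon)
  fix e :: real assume e: "e > 0"
  have "a \<le> b + (e/(C+1)) * C" using assms(1)[of "e/(C+1)"] e assms(2) by (simp add: add_nonneg_pos)
  also have "(e/(C+1)) * C \<le> e" using e assms(2) by (simp add: field_simps)
  finally show "a \<le> b + e" by simp
qed

lemma P_distr:
  fixes f k \<phi> :: "real \<Rightarrow> real"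
  assumes P: "Pprop I f k" and oI: "open I" and iI: "is_interval I"
    and cf: "continuous_on I f" and ck: "continuous_on I k"
    and tf: "test_fun I \<phi>" and pos: "\<forall>x. \<phi> x \<ge> 0"
  shows "integral I (\<lambda>x. f x * deriv (deriv \<phi>) x) \<le> integral I (\<lambda>x. k x * \<phi> x)"
proof -
  define K where "K = closure {x. \<phi> x \<noteq> 0}"
  have Kc: "compact K" and KI: "K \<subseteq> I" and sm: "smooth_on UNIV \<phi>"
    using tf unfolding test_fun_def K_def by simp_all
  have dphi1: "(\<phi> has_real_derivative deriv \<phi> y) (at y)" for y using smooth_D(1)[OF sm] by simp
  have dphi2: "(deriv \<phi> has_real_derivative deriv (deriv \<phi>) y) (at y)" for y using smooth_D(2)[OF sm] by simp
  have c2: "isCont (deriv (deriv \<phi>)) y" for y using smooth_D(3)[OF sm] by simp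
  have c0: "isCont \<phi> y" for y using dphi1 DERIV_isCont by blast
  have z0: "\<phi> y = 0" if "y \<notin> K" for y using that closure_subset[of "{x. \<phi> x \<noteq> 0}"] unfolding K_def by auto
  have oK: "open (-K)" using compact_imp_closed[OF Kc] by (simp add: open_Compl)
  have z1: "deriv \<phi> y = 0" if "y \<notin> K" for y
  proof -
    have "(\<phi> has_real_derivative 0) (at y)"
      by (rule has_field_derivative_transform_within_open[of "\<lambda>_. 0" 0 y "-K"]) (use oK that z0 in auto)
    then show ?thesis using DERIV_unique[OF dphi1] by blast
  qed
  have z2: "deriv (deriv \<phi>) y = 0" if "y \<notin> K" for y
  proof -
    have "(deriv \<phi> has_real_derivative 0) (at y)"
      by (rule has_field_derivative_transform_within_open[of "\<lambda>_. 0" 0 y "-K"]) (use oK that z1 in auto)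
    then show ?thesis using DERIV_unique[OF dphi2] by blast
  qed
  show ?thesis
  proof (cases "K = {}")
    case True
    then have "\<And>y. deriv (deriv \<phi>) y = 0" "\<And>y. \<phi> y = 0" using z0 z2 by auto
    then show ?thesis by simp
  next
    case False
    define A0 where "A0 = Inf K"
    define B0 where "B0 = Sup K"
    have bK: "bdd_below K" "bdd_above K" using compact_imp_bounded[OF Kc]
      by (auto simp: bounded_imp_bdd_below bounded_imp_bdd_above)
    have A0K: "A0 \<in> K" unfolding A0_def
      using closed_contains_Inf[OF False bK(1) compact_imp_closed[OF Kc]] .
    have B0K: "B0 \<in> K" unfolding B0_def
      using closed_contains_Sup[OF False bK(2) compact_imp_closed[OF Kc]] .
    have KAB: "K \<subseteq> {A0..B0}" unfolding A0_def B0_def using bK by (auto intro: cInf_lower cSup_upper)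
    obtain rA where rA: "rA > 0" "ball A0 rA \<subseteq> I" using A0K KI oI open_contains_ball by blast
    obtain rB where rB: "rB > 0" "ball B0 rB \<subseteq> I" using B0K KI oI open_contains_ball by blast
    define r0 where "r0 = min rA rB / 3"
    have r0: "r0 > 0" "3*r0 \<le> rA" "3*r0 \<le> rB" using rA rB by (auto simp: r0_def)
    have AB: "A0 \<le> B0" using KAB A0K by auto
    have J'I: "{A0 - 2*r0..B0 + 2*r0} \<subseteq> I"
    proof
      fix x assume x: "x \<in> {A0 - 2*r0..B0 + 2*r0}"
      have "A0 - 2*r0 \<in> ball A0 rA" using r0 by (simp add: dist_real_def)
      then have a: "A0 - 2*r0 \<in> I" using rA(2) by blast
      have "B0 + 2*r0 \<in> ball B0 rB" using r0 by (simp add: dist_real_def)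
      then have b: "B0 + 2*r0 \<in> I" using rB(2) by blast
      show "x \<in> I" using iI[unfolded is_interval_1, rule_format, OF a b] x by simp
    qed
    define J where "J = {A0 - r0..B0 + r0}"
    define J' where "J' = {A0 - 2*r0..B0 + 2*r0}"
    have JJ': "J \<subseteq> J'" using r0 by (auto simp: J_def J'_def)
    have JI: "J \<subseteq> I" using JJ' J'I unfolding J'_def by (rule subset_trans)
    have KJ: "K \<subseteq> J" using KAB r0 by (auto simp: J_def)
    have cfJ': "continuous_on J' f" using continuous_on_subset[OF cf J'I] unfolding J'_def .
    have ckJ': "continuous_on J' k" using continuous_on_subset[OF ck J'I] unfolding J'_def .
    have cfJ: "continuous_on J f" using continuous_on_subset[OF cfJ' JJ'] .
    have ckJ: "continuous_on J k" using continuous_on_subset[OF ckJ' JJ'] .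
    have cphi: "continuous_on S \<phi>" for S using c0 by (simp add: continuous_at_imp_continuous_on)
    have cphi2: "continuous_on S (deriv (deriv \<phi>))" for S using c2 by (simp add: continuous_at_imp_continuous_on)
    have cfs: "continuous_on J (\<lambda>y. f (y + s))" if "\<bar>s\<bar> \<le> r0" for s
    proof (rule continuous_on_compose2[OF cfJ'])
      show "continuous_on J (\<lambda>y. y + s)" by (intro continuous_intros)
      show "(\<lambda>y. y + s) ` J \<subseteq> J'" using that by (auto simp: J_def J'_def)
    qed
    have e1: "integral I (\<lambda>x. f x * deriv (deriv \<phi>) x) = integral J (\<lambda>x. f x * deriv (deriv \<phi>) x)"
      unfolding J_def
    proof (rule int_superset)
      show "continuous_on {A0 - r0..B0 + r0} (\<lambda>x. f x * deriv (deriv \<phi>) x)"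
        using cfJ cphi2 unfolding J_def by (intro continuous_intros)
      show "f y * deriv (deriv \<phi>) y = 0" if "y \<notin> {A0 - r0..B0 + r0}" for y
      proof -
        have "y \<notin> K" using that KJ unfolding J_def by blast
        then show ?thesis using z2[of y] by simp
      qed
      show "{A0 - r0..B0 + r0} \<subseteq> I" using JI unfolding J_def .
    qed
    have e2: "integral I (\<lambda>x. k x * \<phi> x) = integral J (\<lambda>x. k x * \<phi> x)"
      unfolding J_def
    proof (rule int_superset)
      show "continuous_on {A0 - r0..B0 + r0} (\<lambda>x. k x * \<phi> x)"
        using ckJ cphi unfolding J_def by (intro continuous_intros)
      show "k y * \<phi> y = 0" if "y \<notin> {A0 - r0..B0 + r0}" for y
      proof -
        have "y \<notin> K" using that KJ unfolding J_def by blast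
        then show ?thesis using z0[of y] by simp
      qed
      show "{A0 - r0..B0 + r0} \<subseteq> I" using JI unfolding J_def .
    qed
    have TR: "integral J (\<lambda>y. f y * \<phi> (y + s)) = integral J (\<lambda>y. f (y - s) * \<phi> y)" if s: "\<bar>s\<bar> < r0" for s
    proof -
      define F where "F z = f (z - s) * \<phi> z" for z
      have "continuous_on J (\<lambda>y. f (y + - s))" using cfs[of "-s"] s by simp
      then have "continuous_on J (\<lambda>y. f (y - s))" by simp
      then have cF: "continuous_on J F" unfolding F_def using cphi by (intro continuous_intros)
      have "integral {A0 - r0 - s..B0 + r0 - s} (\<lambda>x. F (x + s)) = integral J F"
        unfolding J_def by (rule int_shift) (use cF J_def in simp)
      moreover have "(\<lambda>x. F (x + s)) = (\<lambda>y. f y * \<phi> (y + s))" by (auto simp: F_def)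
      moreover have "integral UNIV (\<lambda>y. f y * \<phi> (y + s)) = integral {A0 - r0 - s..B0 + r0 - s} (\<lambda>y. f y * \<phi> (y + s))"
      proof (rule int_superset)
        have "continuous_on {A0 - r0 - s..B0 + r0 - s} f"
        proof (rule continuous_on_subset[OF cfJ'])
          show "{A0 - r0 - s..B0 + r0 - s} \<subseteq> J'" using s unfolding J'_def by auto
        qed
        moreover have "continuous_on {A0 - r0 - s..B0 + r0 - s} (\<lambda>y. \<phi> (y + s))"
          by (rule continuous_on_compose2[OF cphi[of UNIV]]) (auto intro: continuous_intros)
        ultimately show "continuous_on {A0 - r0 - s..B0 + r0 - s} (\<lambda>y. f y * \<phi> (y + s))"
          by (intro continuous_intros)
        show "f y * \<phi> (y + s) = 0" if "y \<notin> {A0 - r0 - s..B0 + r0 - s}" for y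
        proof -
          have "y + s \<notin> {A0..B0}" using that r0 s by auto
          then have "y + s \<notin> K" using KAB by blast
          then show ?thesis using z0 by simp
        qed
      qed simp
      moreover have "integral UNIV (\<lambda>y. f y * \<phi> (y + s)) = integral J (\<lambda>y. f y * \<phi> (y + s))"
      proof (unfold J_def, rule int_superset)
        have "continuous_on {A0 - r0..B0 + r0} f" using cfJ J_def by simp
        moreover have "continuous_on {A0 - r0..B0 + r0} (\<lambda>y. \<phi> (y + s))"
          by (rule continuous_on_compose2[OF cphi[of UNIV]]) (auto intro: continuous_intros)
        ultimately show "continuous_on {A0 - r0..B0 + r0} (\<lambda>y. f y * \<phi> (y + s))"
          by (intro continuous_intros)
        show "f y * \<phi> (y + s) = 0" if "y \<notin> {A0 - r0..B0 + r0}" for y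
        proof -
          have "y + s \<notin> {A0..B0}" using that r0 s by auto
          then have "y + s \<notin> K" using KAB by blast
          then show ?thesis using z0 by simp
        qed
      qed simp
      ultimately show ?thesis unfolding F_def by simp
    qed
    have intJ: "F integrable_on J" if "continuous_on J F" for F :: "real \<Rightarrow> real"
      using integrable_continuous_interval that unfolding J_def by blast
    have cps: "continuous_on J (\<lambda>y. \<phi> (y + s))" for s
      by (rule continuous_on_compose2[OF cphi[of UNIV]]) (auto intro: continuous_intros)
    have main: "integral J (\<lambda>x. f x * deriv (deriv \<phi>) x) \<le> integral J (\<lambda>x. k x * \<phi> x)"
    proof -
      define Cf where "Cf = integral J (\<lambda>y. \<bar>f y\<bar>)"
      define Cp where "Cp = integral J \<phi>"
      have Cf0: "Cf \<ge> 0" unfolding Cf_def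
      proof (rule integral_nonneg)
        show "(\<lambda>y. \<bar>f y\<bar>) integrable_on J" using cfJ by (intro intJ continuous_intros)
      qed simp
      have Cp0: "Cp \<ge> 0" unfolding Cp_def
      proof (rule integral_nonneg)
        show "\<phi> integrable_on J" using cphi by (intro intJ)
      qed (use pos in simp)
      show ?thesis
      proof (rule eps_le[where C = "Cf + Cp"])
        show "0 \<le> Cf + Cp" using Cf0 Cp0 by simp
        fix \<epsilon> :: real assume \<epsilon>: "\<epsilon> > 0"
        have "uniformly_continuous_on J' (deriv (deriv \<phi>))"
          by (rule compact_uniformly_continuous[OF cphi2]) (simp add: J'_def)
        then obtain d1 where d1: "d1 > 0" "\<forall>x\<in>J'. \<forall>x'\<in>J'. dist x' x < d1 \<longrightarrow> dist (deriv (deriv \<phi>) x') (deriv (deriv \<phi>) x) < \<epsilon>"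
          using \<epsilon> unfolding uniformly_continuous_on_def by metis
        have "uniformly_continuous_on J' k"
          by (rule compact_uniformly_continuous[OF ckJ']) (simp add: J'_def)
        then obtain d2 where d2: "d2 > 0" "\<forall>x\<in>J'. \<forall>x'\<in>J'. dist x' x < d2 \<longrightarrow> dist (k x') (k x) < \<epsilon>"
          using \<epsilon> unfolding uniformly_continuous_on_def by metis
        define t where "t = min r0 (min d1 d2) / 2"
        have t: "0 < t" "t < r0" "t < d1" "t < d2" using r0 d1 d2 by (auto simp: t_def)
        have t2: "t^2 > 0" using t by simp
        have S1: "t^2 * (f y * deriv (deriv \<phi>) y) \<le> f y * (\<phi> (y+t) + \<phi> (y-t) - 2*\<phi> y) + t^2 * (\<epsilon> * \<bar>f y\<bar>)"
          if y: "y \<in> J" for y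
        proof -
          obtain \<xi> where \<xi>: "\<bar>\<xi> - y\<bar> < t" "\<phi> (y+t) + \<phi> (y-t) - 2*\<phi> y = t^2 * deriv (deriv \<phi>) \<xi>"
            using second_diff_mvt[OF t(1), of y \<phi> "deriv \<phi>" "deriv (deriv \<phi>)"] dphi1 dphi2 by blast
          have yJ': "y \<in> J'" using y JJ' by blast
          have "\<xi> \<in> J'" using y \<xi> t unfolding J_def J'_def by auto
          then have "\<bar>deriv (deriv \<phi>) \<xi> - deriv (deriv \<phi>) y\<bar> < \<epsilon>"
            using d1(2) yJ' \<xi> t by (auto simp: dist_real_def)
          then have "\<bar>f y\<bar> * \<bar>deriv (deriv \<phi>) y - deriv (deriv \<phi>) \<xi>\<bar> \<le> \<bar>f y\<bar> * \<epsilon>"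
            by (intro mult_left_mono) auto
          moreover have "f y * (deriv (deriv \<phi>) y - deriv (deriv \<phi>) \<xi>) \<le> \<bar>f y\<bar> * \<bar>deriv (deriv \<phi>) y - deriv (deriv \<phi>) \<xi>\<bar>"
            by (metis abs_ge_self abs_mult)
          ultimately have "f y * deriv (deriv \<phi>) y \<le> f y * deriv (deriv \<phi>) \<xi> + \<epsilon> * \<bar>f y\<bar>"
            by (simp add: algebra_simps)
          then have "t^2 * (f y * deriv (deriv \<phi>) y) \<le> t^2 * (f y * deriv (deriv \<phi>) \<xi> + \<epsilon> * \<bar>f y\<bar>)"
            using t2 by (intro mult_left_mono) auto
          then show ?thesis using \<xi>(2) by (simp add: algebra_simps)
        qed
        have S2: "\<phi> y * (f (y+t) + f (y-t) - 2*f y) \<le> t^2 * (\<phi> y * (k y + \<epsilon>))" if y: "y \<in> J" for y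
        proof (cases "y \<in> K")
          case True
          then have yAB: "y \<in> {A0..B0}" using KAB by blast
          have box: "{y-t..y+t} \<subseteq> I"
          proof -
            have "{y-t..y+t} \<subseteq> J" using yAB t unfolding J_def by auto
            then show ?thesis using JI by blast
          qed
          have "\<forall>z\<in>{y-t..y+t}. k z < k y + \<epsilon>"
          proof
            fix z assume z: "z \<in> {y-t..y+t}"
            have "z \<in> J'" "y \<in> J'" using z yAB t unfolding J'_def by auto
            moreover have "dist z y < d2" using z t by (auto simp: dist_real_def)
            ultimately show "k z < k y + \<epsilon>" using d2(2) by (force simp: dist_real_def)
          qed
          then have "f (y+t) + f (y-t) - 2*f y \<le> (k y + \<epsilon>) * t^2"
            using P box t unfolding Pprop_def by blast
          then have "\<phi> y * (f (y+t) + f (y-t) - 2*f y) \<le> \<phi> y * ((k y + \<epsilon>) * t^2)"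
            using pos by (intro mult_left_mono) auto
          then show ?thesis by (simp add: algebra_simps)
        next
          case False
          then show ?thesis using z0 by simp
        qed
        have cfp: "continuous_on J (\<lambda>y. f (y + t))" "continuous_on J (\<lambda>y. f (y - t))"
          using cfs[of t] cfs[of "-t"] t by auto
        have split1: "integral J (\<lambda>y. f y * (\<phi> (y+t) + \<phi> (y-t) - 2*\<phi> y))
            = integral J (\<lambda>y. f y * \<phi> (y+t)) + integral J (\<lambda>y. f y * \<phi> (y-t)) - 2 * integral J (\<lambda>y. f y * \<phi> y)"
        proof -
          have i1: "(\<lambda>y. f y * \<phi> (y+t)) integrable_on J" using cps[of t] cfJ by (intro intJ continuous_intros)
          have i2: "(\<lambda>y. f y * \<phi> (y-t)) integrable_on J" using cps[of "-t"] cfJ by (intro intJ continuous_intros) simp_all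
          have i3: "(\<lambda>y. f y * \<phi> y) integrable_on J" using cphi cfJ by (intro intJ continuous_intros)
          have "integral J (\<lambda>y. f y * (\<phi> (y+t) + \<phi> (y-t) - 2*\<phi> y))
              = integral J (\<lambda>y. (f y * \<phi> (y+t) + f y * \<phi> (y-t)) - 2 * (f y * \<phi> y))"
            by (simp add: algebra_simps)
          also have "\<dots> = integral J (\<lambda>y. f y * \<phi> (y+t) + f y * \<phi> (y-t)) - integral J (\<lambda>y. 2 * (f y * \<phi> y))"
            by (rule integral_diff) (use i1 i2 i3 integrable_add int_cmul in auto)
          also have "\<dots> = integral J (\<lambda>y. f y * \<phi> (y+t)) + integral J (\<lambda>y. f y * \<phi> (y-t)) - 2 * integral J (\<lambda>y. f y * \<phi> y)"
            using integral_add[OF i1 i2] integral_mult[OF i3, of 2] by simp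
          finally show ?thesis .
        qed
        have split2: "integral J (\<lambda>y. \<phi> y * (f (y+t) + f (y-t) - 2*f y))
            = integral J (\<lambda>y. f (y-t) * \<phi> y) + integral J (\<lambda>y. f (y+t) * \<phi> y) - 2 * integral J (\<lambda>y. f y * \<phi> y)"
        proof -
          have i1: "(\<lambda>y. f (y-t) * \<phi> y) integrable_on J" using cphi cfp by (intro intJ continuous_intros)
          have i2: "(\<lambda>y. f (y+t) * \<phi> y) integrable_on J" using cphi cfp by (intro intJ continuous_intros)
          have i3: "(\<lambda>y. f y * \<phi> y) integrable_on J" using cphi cfJ by (intro intJ continuous_intros)
          have "integral J (\<lambda>y. \<phi> y * (f (y+t) + f (y-t) - 2*f y))
              = integral J (\<lambda>y. (f (y-t) * \<phi> y + f (y+t) * \<phi> y) - 2 * (f y * \<phi> y))"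
            by (simp add: algebra_simps)
          also have "\<dots> = integral J (\<lambda>y. f (y-t) * \<phi> y + f (y+t) * \<phi> y) - integral J (\<lambda>y. 2 * (f y * \<phi> y))"
            by (rule integral_diff) (use i1 i2 i3 integrable_add int_cmul in auto)
          also have "\<dots> = integral J (\<lambda>y. f (y-t) * \<phi> y) + integral J (\<lambda>y. f (y+t) * \<phi> y) - 2 * integral J (\<lambda>y. f y * \<phi> y)"
            using integral_add[OF i1 i2] integral_mult[OF i3, of 2] by simp
          finally show ?thesis .
        qed
        have tr1: "integral J (\<lambda>y. f y * \<phi> (y+t)) = integral J (\<lambda>y. f (y-t) * \<phi> y)"
          using TR[of t] t by simp
        have tr2: "integral J (\<lambda>y. f y * \<phi> (y-t)) = integral J (\<lambda>y. f (y+t) * \<phi> y)"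
          using TR[of "-t"] t by simp
        have iA: "(\<lambda>y. f y * deriv (deriv \<phi>) y) integrable_on J" using cphi2 cfJ by (intro intJ continuous_intros)
        have iB: "(\<lambda>y. f y * (\<phi> (y+t) + \<phi> (y-t) - 2*\<phi> y)) integrable_on J"
          using cps[of t] cps[of "-t"] cphi cfJ by (intro intJ continuous_intros) simp_all
        have iC: "(\<lambda>y. \<bar>f y\<bar>) integrable_on J" using cfJ by (intro intJ continuous_intros)
        have iD: "(\<lambda>y. \<phi> y * (f (y+t) + f (y-t) - 2*f y)) integrable_on J"
          using cfp cphi cfJ by (intro intJ continuous_intros)
        have iE: "(\<lambda>y. k y * \<phi> y) integrable_on J" using ckJ cphi by (intro intJ continuous_intros)
        have iF: "\<phi> integrable_on J" using cphi by (intro intJ)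
        have iG: "(\<lambda>y. \<phi> y * (k y + \<epsilon>)) integrable_on J" using ckJ cphi by (intro intJ continuous_intros)
        have "t^2 * integral J (\<lambda>y. f y * deriv (deriv \<phi>) y) = integral J (\<lambda>y. t^2 * (f y * deriv (deriv \<phi>) y))"
          by (rule integral_mult[OF iA])
        also have "\<dots> \<le> integral J (\<lambda>y. f y * (\<phi> (y+t) + \<phi> (y-t) - 2*\<phi> y) + t^2 * (\<epsilon> * \<bar>f y\<bar>))"
          by (rule integral_le[OF int_cmul[OF iA] integrable_add[OF iB int_cmul[OF int_cmul[OF iC]]]]) (use S1 in auto)
        also have "\<dots> = integral J (\<lambda>y. f y * (\<phi> (y+t) + \<phi> (y-t) - 2*\<phi> y)) + t^2 * (\<epsilon> * Cf)"
        proof -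
          have "integral J (\<lambda>y. t^2 * (\<epsilon> * \<bar>f y\<bar>)) = t^2 * (\<epsilon> * Cf)"
            unfolding Cf_def using integral_mult[OF iC, of "t^2 * \<epsilon>"] by (simp add: algebra_simps)
          moreover have "(\<lambda>y. t^2 * (\<epsilon> * \<bar>f y\<bar>)) integrable_on J"
            using iC int_cmul by auto
          ultimately show ?thesis using integral_add[OF iB] by simp
        qed
        also have "integral J (\<lambda>y. f y * (\<phi> (y+t) + \<phi> (y-t) - 2*\<phi> y)) = integral J (\<lambda>y. \<phi> y * (f (y+t) + f (y-t) - 2*f y))"
          using split1 split2 tr1 tr2 by simp
        also have "integral J (\<lambda>y. \<phi> y * (f (y+t) + f (y-t) - 2*f y)) \<le> integral J (\<lambda>y. t^2 * (\<phi> y * (k y + \<epsilon>)))"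
          by (rule integral_le[OF iD int_cmul[OF iG]]) (use S2 in auto)
        also have "integral J (\<lambda>y. t^2 * (\<phi> y * (k y + \<epsilon>))) = t^2 * (integral J (\<lambda>y. k y * \<phi> y) + \<epsilon> * Cp)"
        proof -
          have "integral J (\<lambda>y. t^2 * (\<phi> y * (k y + \<epsilon>))) = integral J (\<lambda>y. t^2 * (k y * \<phi> y) + (t^2*\<epsilon>) * \<phi> y)"
            by (simp add: algebra_simps)
          also have "\<dots> = integral J (\<lambda>y. t^2 * (k y * \<phi> y)) + integral J (\<lambda>y. (t^2*\<epsilon>) * \<phi> y)"
            by (rule integral_add) (use iE iF int_cmul in auto)
          also have "\<dots> = t^2 * (integral J (\<lambda>y. k y * \<phi> y) + \<epsilon> * Cp)"
            using integral_mult[OF iE, of "t^2"] integral_mult[OF iF, of "t^2*\<epsilon>"] unfolding Cp_def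
            by (simp add: algebra_simps)
          finally show ?thesis .
        qed
        finally have "t^2 * integral J (\<lambda>y. f y * deriv (deriv \<phi>) y) \<le> t^2 * (integral J (\<lambda>y. k y * \<phi> y) + \<epsilon> * (Cf + Cp))"
          by (simp add: algebra_simps)
        then show "integral J (\<lambda>x. f x * deriv (deriv \<phi>) x) \<le> integral J (\<lambda>x. k x * \<phi> x) + \<epsilon> * (Cf + Cp)"
          using t2 by simp
      qed
    qed
    show ?thesis using e1 e2 main by simp
  qed
qed

definition qq :: "real \<Rightarrow> real" where "qq x = x * (1 - x)"

lemma exp_lim0: "((\<lambda>z::real. exp (-1/z) / z^m) \<longlongrightarrow> 0) (at_right 0)"
proof -
  have h: "((\<lambda>z. (inverse z)^m / exp (inverse z)) \<longlongrightarrow> 0) (at_right (0::real))"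
    using filterlim_compose[OF tendsto_power_div_exp_0[of m] filterlim_inverse_at_top_right] by simp
  have ev: "eventually (\<lambda>z. (inverse z)^m / exp (inverse z) = exp (-1/z) / z^m) (at_right (0::real))"
  proof (rule eventually_at_rightI[of 0 1])
    fix z :: real assume "z \<in> {0<..<1}"
    have "exp (-1/z) = inverse (exp (inverse z))" by (simp add: exp_minus inverse_eq_divide)
    then show "(inverse z)^m / exp (inverse z) = exp (-1/z) / z^m"
      by (simp add: power_inverse divide_inverse mult.commute)
  qed simp
  show ?thesis using tendsto_cong[OF ev] h by simp
qed

lemma lim_poly_exp:
  fixes p :: "real poly"
  assumes "filterlim qq (at_right 0) F" "((\<lambda>x. x) \<longlongrightarrow> a) F"
  shows "((\<lambda>x. poly p x * exp (-1 / qq x) / qq x ^ m) \<longlongrightarrow> 0) F"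
proof -
  have "((\<lambda>x. exp (-1 / qq x) / qq x ^ m) \<longlongrightarrow> 0) F"
    using filterlim_compose[OF exp_lim0 assms(1)] by simp
  moreover have "((\<lambda>x. poly p x) \<longlongrightarrow> poly p a) F"
    using assms(2) by (rule tendsto_intros)
  ultimately have "((\<lambda>x. poly p x * (exp (-1 / qq x) / qq x ^ m)) \<longlongrightarrow> poly p a * 0) F"
    by (intro tendsto_mult)
  then show ?thesis by simp
qed

lemma qq_right0: "filterlim qq (at_right 0) (at_right 0)"
proof (rule tendsto_imp_filterlim_at_right)
  have "((\<lambda>x. x * (1 - x)) \<longlongrightarrow> 0 * (1 - 0)) (at_right (0::real))"
    by (rule tendsto_mult[OF tendsto_ident_at tendsto_diff[OF tendsto_const tendsto_ident_at]])
  then show "(qq \<longlongrightarrow> 0) (at_right 0)" unfolding qq_def by simp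
  show "eventually (\<lambda>x. qq x > 0) (at_right 0)"
    unfolding eventually_at_right_field qq_def by (intro exI[of _ 1]) auto
qed

lemma qq_left1: "filterlim qq (at_right 0) (at_left 1)"
proof (rule tendsto_imp_filterlim_at_right)
  have "((\<lambda>x. x * (1 - x)) \<longlongrightarrow> 1 * (1 - 1)) (at_left (1::real))"
    by (rule tendsto_mult[OF tendsto_ident_at tendsto_diff[OF tendsto_const tendsto_ident_at]])
  then show "(qq \<longlongrightarrow> 0) (at_left 1)" unfolding qq_def by simp
  show "eventually (\<lambda>x. qq x > 0) (at_left 1)"
    unfolding eventually_at_left_field qq_def by (intro exI[of _ 0]) auto
qed

definition Qp :: "real poly" where "Qp = [:0, 1, -1:]"

lemma poly_Qp: "poly Qp x = qq x"
  by (simp add: Qp_def qq_def algebra_simps)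
lemma poly_dQp: "poly (pderiv Qp) x = 1 - 2*x"
  by (simp add: Qp_def pderiv_pCons)

fun PP :: "nat \<Rightarrow> real poly" where
  "PP 0 = 1"
| "PP (Suc n) = pderiv (PP n) * Qp^2 - smult (2 * real n) (PP n * pderiv Qp * Qp) + PP n * pderiv Qp"

definition Db :: "nat \<Rightarrow> real \<Rightarrow> real" where
  "Db n x = (if 0 < x \<and> x < 1 then poly (PP n) x * exp (-1 / qq x) / qq x ^ (2*n) else 0)"

lemma alg_Db:
  fixes P P' E q Q W d m :: real
  assumes "q \<noteq> 0" "Q \<noteq> 0" "q * W = m * Q"
  shows "((P' * E + E * (d / q^2) * P) * Q - P * E * (W * d)) / (Q * Q) = (P' * q^2 - m * P * d * q + P * d) * E / (Q * q^2)"
proof -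
  have W: "W = m * Q / q" using assms by (simp add: field_simps)
  show ?thesis unfolding W using assms(1,2) by (simp add: field_simps power2_eq_square)
qed

lemma Db_interior:
  assumes x: "0 < x" "x < 1"
  shows "((\<lambda>x. poly (PP n) x * exp (-1 / qq x) / qq x ^ (2*n)) has_real_derivative
           poly (PP (Suc n)) x * exp (-1 / qq x) / qq x ^ (2*Suc n)) (at x)"
proof -
  have q0: "qq x \<noteq> 0" using x by (simp add: qq_def)
  have dq: "(qq has_real_derivative (1 - 2*x)) (at x)"
    unfolding qq_def by (auto intro!: derivative_eq_intros)
  have dinv: "((\<lambda>x. -1 / qq x) has_real_derivative ((1 - 2*x) / qq x ^ 2)) (at x)"
    using DERIV_minus[OF DERIV_inverse_fun[OF dq q0]] by (simp add: divide_inverse power2_eq_square)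
  have dE: "((\<lambda>x. exp (-1 / qq x)) has_real_derivative exp (-1 / qq x) * ((1 - 2*x) / qq x ^ 2)) (at x)"
    by (rule DERIV_chain2[OF DERIV_exp dinv])
  have dP: "((\<lambda>x. poly (PP n) x) has_real_derivative poly (pderiv (PP n)) x) (at x)" by (rule poly_DERIV)
  have dPE: "((\<lambda>x. poly (PP n) x * exp (-1 / qq x)) has_real_derivative
      poly (pderiv (PP n)) x * exp (-1 / qq x) + exp (-1 / qq x) * ((1 - 2*x) / qq x ^ 2) * poly (PP n) x) (at x)"
    using DERIV_mult[OF dP dE] .
  have dQ: "((\<lambda>x. qq x ^ (2*n)) has_real_derivative real (2*n) * qq x ^ (2*n - 1) * (1 - 2*x)) (at x)"
    using DERIV_chain2[OF DERIV_pow[of "2*n"] dq] by simp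
  have Q0: "qq x ^ (2*n) \<noteq> 0" using q0 by simp
  have d: "((\<lambda>x. poly (PP n) x * exp (-1 / qq x) / qq x ^ (2*n)) has_real_derivative
      ((poly (pderiv (PP n)) x * exp (-1 / qq x) + exp (-1 / qq x) * ((1 - 2*x) / qq x ^ 2) * poly (PP n) x) * qq x ^ (2*n)
        - poly (PP n) x * exp (-1 / qq x) * (real (2*n) * qq x ^ (2*n - 1) * (1 - 2*x))) / (qq x ^ (2*n) * qq x ^ (2*n))) (at x)"
    using DERIV_divide[OF dPE dQ Q0] by (simp add: mult.assoc)
  have W: "qq x * (real (2*n) * qq x ^ (2*n - 1)) = real (2*n) * qq x ^ (2*n)"
  proof (cases "n = 0")
    case False
    then have "qq x ^ (2*n - 1) * qq x = qq x ^ (2*n)" by (intro power_minus_mult) simp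
    then show ?thesis by (metis mult.commute mult.left_commute)
  qed simp
  have "((poly (pderiv (PP n)) x * exp (-1 / qq x) + exp (-1 / qq x) * ((1 - 2*x) / qq x ^ 2) * poly (PP n) x) * qq x ^ (2*n)
        - poly (PP n) x * exp (-1 / qq x) * (real (2*n) * qq x ^ (2*n - 1) * (1 - 2*x))) / (qq x ^ (2*n) * qq x ^ (2*n))
      = (poly (pderiv (PP n)) x * qq x ^ 2 - real (2*n) * poly (PP n) x * (1 - 2*x) * qq x + poly (PP n) x * (1 - 2*x)) * exp (-1 / qq x) / (qq x ^ (2*n) * qq x ^ 2)"
    using alg_Db[OF q0 Q0 W, of "poly (pderiv (PP n)) x" "exp (-1 / qq x)" "1 - 2*x" "poly (PP n) x"]
    by (simp add: mult.assoc)
  also have "\<dots> = poly (PP (Suc n)) x * exp (-1 / qq x) / qq x ^ (2*Suc n)"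
    by (simp add: poly_Qp poly_dQp power_add algebra_simps) (simp add: power2_eq_square)
  finally show ?thesis using d by simp
qed

lemma Db_deriv: "(Db n has_real_derivative Db (Suc n) x) (at x)"
proof -
  consider "x < 0" | "x = 0" | "0 < x \<and> x < 1" | "x = 1" | "x > 1" by linarith
  then show ?thesis
  proof cases
    case 1
    have "((\<lambda>_. 0) has_real_derivative 0) (at x)" by simp
    then have "(Db n has_real_derivative 0) (at x)"
      by (rule has_field_derivative_transform_within_open[of _ _ _ "{..<0}"]) (use 1 in \<open>auto simp: Db_def\<close>)
    then show ?thesis using 1 by (simp add: Db_def)
  next
    case 5
    have "((\<lambda>_. 0) has_real_derivative 0) (at x)" by simp
    then have "(Db n has_real_derivative 0) (at x)"
      by (rule has_field_derivative_transform_within_open[of _ _ _ "{1<..}"]) (use 5 in \<open>auto simp: Db_def\<close>)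
    then show ?thesis using 5 by (simp add: Db_def)
  next
    case 3
    have "(Db n has_real_derivative poly (PP (Suc n)) x * exp (-1 / qq x) / qq x ^ (2*Suc n)) (at x)"
      by (rule has_field_derivative_transform_within_open[OF Db_interior[OF conjunct1[OF 3] conjunct2[OF 3]], of "{0<..<1}"])
         (use 3 in \<open>auto simp: Db_def\<close>)
    then show ?thesis using 3 by (simp add: Db_def)
  next
    case 2
    have "((\<lambda>y. (Db n y - Db n 0) / (y - 0)) \<longlongrightarrow> 0) (at 0)"
      unfolding filterlim_at_split
    proof
      have "eventually (\<lambda>y. (Db n y - Db n 0) / (y - 0) = 0) (at_left (0::real))"
        unfolding eventually_at_left_field by (intro exI[of _ "-1"]) (auto simp: Db_def)
      then show "((\<lambda>y. (Db n y - Db n 0) / (y - 0)) \<longlongrightarrow> 0) (at_left 0)"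
        by (rule tendsto_eventually)
    next
      have ev: "eventually (\<lambda>y. poly (PP n * [:1,-1:]) y * exp (-1 / qq y) / qq y ^ (2*n+1) = (Db n y - Db n 0) / (y - 0)) (at_right (0::real))"
      proof (rule eventually_at_rightI[of 0 1])
        fix y :: real assume y: "y \<in> {0<..<1}"
        then have q: "qq y = y * (1 - y)" "y \<noteq> 0" "1 - y \<noteq> 0" by (auto simp: qq_def)
        show "poly (PP n * [:1,-1:]) y * exp (-1 / qq y) / qq y ^ (2*n+1) = (Db n y - Db n 0) / (y - 0)"
          using y unfolding Db_def by (simp add: q(1) power_mult_distrib field_simps)
      qed simp
      have "((\<lambda>y. poly (PP n * [:1,-1:]) y * exp (-1 / qq y) / qq y ^ (2*n+1)) \<longlongrightarrow> 0) (at_right 0)"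
        by (rule lim_poly_exp[OF qq_right0 tendsto_ident_at])
      then show "((\<lambda>y. (Db n y - Db n 0) / (y - 0)) \<longlongrightarrow> 0) (at_right 0)"
        using tendsto_cong[OF ev] by simp
    qed
    then have "(Db n has_real_derivative 0) (at 0)" by (simp add: has_field_derivative_iff)
    then show ?thesis using 2 by (simp add: Db_def)
  next
    case 4
    have "((\<lambda>y. (Db n y - Db n 1) / (y - 1)) \<longlongrightarrow> 0) (at 1)"
      unfolding filterlim_at_split
    proof
      have ev: "eventually (\<lambda>y. poly (PP n * [:0,-1:]) y * exp (-1 / qq y) / qq y ^ (2*n+1) = (Db n y - Db n 1) / (y - 1)) (at_left (1::real))"
      proof (rule eventually_at_leftI[of 0 1])
        fix y :: real assume y: "y \<in> {0<..<1}"
        then have q: "qq y = y * (1 - y)" "y \<noteq> 0" "1 - y \<noteq> 0" "y - 1 \<noteq> 0" by (auto simp: qq_def)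
        show "poly (PP n * [:0,-1:]) y * exp (-1 / qq y) / qq y ^ (2*n+1) = (Db n y - Db n 1) / (y - 1)"
          using y unfolding Db_def by (simp add: q(1) power_mult_distrib field_simps)
      qed simp
      have "((\<lambda>y. poly (PP n * [:0,-1:]) y * exp (-1 / qq y) / qq y ^ (2*n+1)) \<longlongrightarrow> 0) (at_left 1)"
        by (rule lim_poly_exp[OF qq_left1 tendsto_ident_at])
      then show "((\<lambda>y. (Db n y - Db n 1) / (y - 1)) \<longlongrightarrow> 0) (at_left 1)"
        using tendsto_cong[OF ev] by simp
    next
      have "eventually (\<lambda>y. (Db n y - Db n 1) / (y - 1) = 0) (at_right (1::real))"
        unfolding eventually_at_right_field by (intro exI[of _ 2]) (auto simp: Db_def)
      then show "((\<lambda>y. (Db n y - Db n 1) / (y - 1)) \<longlongrightarrow> 0) (at_right 1)"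
        by (rule tendsto_eventually)
    qed
    then have "(Db n has_real_derivative 0) (at 1)" by (simp add: has_field_derivative_iff)
    then show ?thesis using 4 by (simp add: Db_def)
  qed
qed

lemma antideriv:
  fixes F :: "real \<Rightarrow> real"
  assumes cF: "\<And>x. isCont F x" and z: "\<And>t. t \<le> 0 \<Longrightarrow> F t = 0"
  shows "((\<lambda>y. integral {-1..y} F) has_real_derivative F y) (at y)"
    and "y \<le> 0 \<Longrightarrow> integral {-1..y} F = 0"
proof -
  have zero: "integral {-1..y} F = 0" if "y \<le> 0" for y
  proof -
    have "integral {-1..y} F = integral {-1..y} (\<lambda>_. 0::real)"
      by (rule integral_cong) (use that z in auto)
    then show ?thesis by simp
  qed
  then show "y \<le> 0 \<Longrightarrow> integral {-1..y} F = 0" by blast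
  show "((\<lambda>y. integral {-1..y} F) has_real_derivative F y) (at y)"
  proof (cases "y < 0")
    case True
    have "((\<lambda>_. 0) has_real_derivative 0) (at y)" by simp
    then have "((\<lambda>y. integral {-1..y} F) has_real_derivative 0) (at y)"
      by (rule has_field_derivative_transform_within_open[of _ _ _ "{..<0}"]) (use True zero in auto)
    then show ?thesis using True z by simp
  next
    case False
    have c: "continuous_on {-1..y+1} F" using cF by (simp add: continuous_at_imp_continuous_on)
    have "((\<lambda>x. integral {-1..x} F) has_real_derivative F y) (at y within {-1..y+1})"
      by (rule integral_has_real_derivative[OF c]) (use False in auto)
    moreover have "at y within {-1..y+1} = at y"
      by (rule at_within_interior) (use False in auto)
    ultimately show ?thesis by simp
  qed
qed

lemma Db0: "Db 0 x = (if 0 < x \<and> x < 1 then exp (-1 / qq x) else 0)"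
  by (simp add: Db_def)

lemma Db0_nonneg: "Db 0 x \<ge> 0" by (simp add: Db0)

lemma Db0_zero: "x \<le> 0 \<or> x \<ge> 1 \<Longrightarrow> Db 0 x = 0" by (auto simp: Db0)

lemma Db_cont: "isCont (Db n) x" using Db_deriv DERIV_isCont by blast

definition Ab :: "real \<Rightarrow> real" where "Ab z = integral {-1..z} (Db 0)"
definition Cb :: real where "Cb = Ab 1"

lemma Ab_deriv: "(Ab has_real_derivative Db 0 z) (at z)"
  unfolding Ab_def[abs_def] by (rule antideriv(1)[OF Db_cont]) (simp add: Db0_zero)

lemma Ab_zero: "z \<le> 0 \<Longrightarrow> Ab z = 0"
  unfolding Ab_def by (rule antideriv(2)[OF Db_cont]) (simp_all add: Db0_zero)

lemma Ab_cont: "isCont Ab z" using Ab_deriv DERIV_isCont by blast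

lemma Ab_one: "z \<ge> 1 \<Longrightarrow> Ab z = Cb"
proof (cases "z = 1")
  case False
  assume z: "z \<ge> 1"
  then have "z > 1" using False by simp
  have "Ab z = Ab 1"
  proof (rule DERIV_isconst2[of 1 z Ab z])
    show "1 < z" by fact
    show "continuous_on {1..z} Ab" using Ab_cont by (simp add: continuous_at_imp_continuous_on)
    show "(Ab has_real_derivative 0) (at x)" if "1 < x" "x < z" for x
      using Ab_deriv[of x] that Db0_zero[of x] by simp
  qed (use z in auto)
  then show ?thesis by (simp add: Cb_def)
qed (simp add: Cb_def)

lemma Cb_pos: "Cb > 0"
proof (rule ccontr)
  assume "\<not> Cb > 0"
  then have C: "Cb \<le> 0" by simp
  have mono: "Ab s \<le> Ab t" if "s \<le> t" for s t
    by (rule DERIV_nonneg_imp_nondecreasing[OF that]) (use Ab_deriv Db0_nonneg in blast)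
  have z: "Ab t = 0" if "t \<in> {0<..<1}" for t
  proof -
    have "Ab 0 \<le> Ab t" "Ab t \<le> Ab 1" using that mono by auto
    then show ?thesis using Ab_zero[of 0] C unfolding Cb_def by simp
  qed
  have "((\<lambda>_. 0) has_real_derivative 0) (at (1/2::real))" by simp
  then have "(Ab has_real_derivative 0) (at (1/2))"
    by (rule has_field_derivative_transform_within_open[of _ _ _ "{0<..<1}"]) (use z in auto)
  moreover have "(Ab has_real_derivative Db 0 (1/2)) (at (1/2))" by (rule Ab_deriv)
  ultimately have "Db 0 (1/2) = 0" using DERIV_unique by blast
  then show False by (simp add: Db0)
qed

definition rho :: "real \<Rightarrow> real \<Rightarrow> real" where "rho d y = Db 0 (y/d) / (d*Cb)"
definition Sf :: "real \<Rightarrow> real \<Rightarrow> real" where "Sf d y = Ab (y/d) / Cb"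
definition Rf :: "real \<Rightarrow> real \<Rightarrow> real" where "Rf d y = integral {-1..y} (Sf d)"
definition Drho :: "real \<Rightarrow> nat \<Rightarrow> real \<Rightarrow> real" where "Drho d n y = Db n (y/d) * (1/d)^n / (d*Cb)"
definition Tf :: "real \<Rightarrow> real \<Rightarrow> real \<Rightarrow> real \<Rightarrow> real \<Rightarrow> real" where
  "Tf d a c b y = Rf d (y-a) - 2*Rf d (y-c) + Rf d (y-b)"
definition DT :: "real \<Rightarrow> real \<Rightarrow> real \<Rightarrow> real \<Rightarrow> nat \<Rightarrow> real \<Rightarrow> real" where
  "DT d a c b n = (case n of 0 \<Rightarrow> Tf d a c b
     | Suc 0 \<Rightarrow> (\<lambda>y. Sf d (y-a) - 2*Sf d (y-c) + Sf d (y-b))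
     | Suc (Suc m) \<Rightarrow> (\<lambda>y. Drho d m (y-a) - 2*Drho d m (y-c) + Drho d m (y-b)))"

lemma shift_deriv:
  assumes "(F has_real_derivative D) (at (y - p))"
  shows "((\<lambda>y. F (y - p)) has_real_derivative D) (at y)"
proof -
  have "((\<lambda>y. F ((\<lambda>y. y - p) y)) has_real_derivative D * 1) (at y)"
    by (rule DERIV_chain2[where f=F and g="\<lambda>y. y - p"]) (use assms in \<open>auto intro!: derivative_eq_intros\<close>)
  then show ?thesis by simp
qed

lemma scale_deriv:
  assumes "(F has_real_derivative D) (at (y / d))" and d0: "d \<noteq> 0"
  shows "((\<lambda>y. F (y / d)) has_real_derivative D * (1/d)) (at y)"
proof -
  have "((\<lambda>y. F ((\<lambda>y. y / d) y)) has_real_derivative D * (1/d)) (at y)"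
    by (rule DERIV_chain2[where f=F and g="\<lambda>y. y / d"]) (use assms in \<open>auto intro!: derivative_eq_intros\<close>)
  then show ?thesis by simp
qed

context
  fixes d :: real
  assumes d: "d > 0"
begin

lemma Sf_deriv: "(Sf d has_real_derivative rho d y) (at y)"
proof -
  have "((\<lambda>y. Ab (y/d) / Cb) has_real_derivative Db 0 (y/d) * (1/d) / Cb) (at y)"
  proof (rule DERIV_cdivide)
    show "((\<lambda>y. Ab (y/d)) has_real_derivative Db 0 (y/d) * (1/d)) (at y)"
      by (rule scale_deriv[OF Ab_deriv]) (use d in simp)
  qed
  then show ?thesis unfolding Sf_def[abs_def] rho_def by simp
qed

lemma Sf_cont: "isCont (Sf d) y" using Sf_deriv DERIV_isCont by blast

lemma Sf_zero: "y \<le> 0 \<Longrightarrow> Sf d y = 0"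
  unfolding Sf_def using d by (simp add: Ab_zero divide_nonpos_pos)

lemma Sf_one: "y \<ge> d \<Longrightarrow> Sf d y = 1"
  unfolding Sf_def using d Cb_pos by (simp add: Ab_one)

lemma Rf_deriv: "(Rf d has_real_derivative Sf d y) (at y)"
  unfolding Rf_def[abs_def] by (rule antideriv(1)[OF Sf_cont]) (simp add: Sf_zero)

lemma Rf_zero: "y \<le> 0 \<Longrightarrow> Rf d y = 0"
  unfolding Rf_def by (rule antideriv(2)[OF Sf_cont]) (simp_all add: Sf_zero)

lemma Rf_cont: "isCont (Rf d) y" using Rf_deriv DERIV_isCont by blast

lemma Rf_lin: "y \<ge> d \<Longrightarrow> Rf d y = Rf d d + (y - d)"
proof (cases "y = d")
  case False
  assume y: "y \<ge> d"
  then have "y > d" using False by simp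
  have "Rf d y - y = Rf d d - d"
  proof (rule DERIV_isconst2[of d y "\<lambda>y. Rf d y - y" y])
    show "d < y" by fact
    show "continuous_on {d..y} (\<lambda>y. Rf d y - y)" using Rf_cont
      by (intro continuous_intros) (simp add: continuous_at_imp_continuous_on)
    show "((\<lambda>y. Rf d y - y) has_real_derivative 0) (at x)" if "d < x" "x < y" for x
      using DERIV_diff[OF Rf_deriv[of x] DERIV_ident] Sf_one[of x] that by simp
  qed (use y in auto)
  then show ?thesis by simp
qed simp

lemma rho_nonneg: "rho d y \<ge> 0"
  unfolding rho_def using d Cb_pos Db0_nonneg by simp

lemma rho_zero: "\<not> (0 < y \<and> y < d) \<Longrightarrow> rho d y = 0"
  unfolding rho_def using d by (auto intro!: Db0_zero simp: divide_le_eq le_divide_eq)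

lemma Drho_deriv: "(Drho d n has_real_derivative Drho d (Suc n) y) (at y)"
proof -
  have "((\<lambda>y. Db n (y/d) * ((1/d)^n / (d*Cb))) has_real_derivative Db (Suc n) (y/d) * (1/d) * ((1/d)^n / (d*Cb))) (at y)"
  proof (rule DERIV_cmult_right)
    show "((\<lambda>y. Db n (y/d)) has_real_derivative Db (Suc n) (y/d) * (1/d)) (at y)"
      by (rule scale_deriv[OF Db_deriv]) (use d in simp)
  qed
  then show ?thesis unfolding Drho_def[abs_def] by (simp add: algebra_simps)
qed

lemma Drho0: "Drho d 0 = rho d"
  by (simp add: Drho_def[abs_def] rho_def[abs_def])

lemma DT_deriv: "(DT d a c b n has_real_derivative DT d a c b (Suc n) y) (at y)"
proof -
  have comb: "((\<lambda>y. F (y-a) - 2*F (y-c) + F (y-b)) has_real_derivative (G (y-a) - 2*G (y-c) + G (y-b))) (at y)"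
    if "\<And>z. (F has_real_derivative G z) (at z)" for F G
    by (intro DERIV_add DERIV_diff DERIV_cmult shift_deriv that)
  show ?thesis
  proof (cases n)
    case 0
    then show ?thesis using comb[OF Rf_deriv] by (simp add: DT_def Tf_def[abs_def])
  next
    case (Suc m)
    show ?thesis
    proof (cases m)
      case 0
      then show ?thesis using Suc comb[OF Sf_deriv] by (simp add: DT_def Drho0)
    next
      case (Suc k)
      then show ?thesis using \<open>n = Suc m\<close> comb[OF Drho_deriv] by (simp add: DT_def)
    qed
  qed
qed

lemma Tf_smooth: "smooth_on U (Tf d a c b)"
  by (rule smooth_seqI[of "DT d a c b"]) (simp add: DT_def, rule DT_deriv)

lemma Tf_d2: "deriv (deriv (Tf d a c b)) = (\<lambda>y. rho d (y-a) - 2*rho d (y-c) + rho d (y-b))"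
proof -
  have "(deriv ^^ 2) (Tf d a c b) = DT d a c b 2"
    by (rule smooth_seq) (simp add: DT_def, rule DT_deriv)
  then show ?thesis by (simp add: numeral_2_eq_2 DT_def Drho0)
qed

end

lemma ftc_at:
  fixes G g :: "real \<Rightarrow> real"
  assumes "A \<le> B" "\<And>y. (G has_real_derivative g y) (at y)"
  shows "(g has_integral (G B - G A)) {A..B}"
proof (rule fundamental_theorem_of_calculus[OF assms(1)])
  fix x assume "x \<in> {A..B}"
  show "(G has_vector_derivative g x) (at x within {A..B})"
    using has_field_derivative_at_within[OF assms(2)[of x]]
    by (simp add: has_real_derivative_iff_has_vector_derivative)
qed

lemma by_parts2:
  fixes T T1 T2 :: "real \<Rightarrow> real"
  assumes AB: "A \<le> B" and d0: "\<And>y. (T has_real_derivative T1 y) (at y)"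
    and d1: "\<And>y. (T1 has_real_derivative T2 y) (at y)"
    and c2: "continuous_on {A..B} T2"
    and e: "T A = 0" "T B = 0" "T1 A = 0" "T1 B = 0"
  shows "integral {A..B} (\<lambda>y. (y-c)^2/2 * T2 y) = integral {A..B} T"
proof -
  define G where "G y = (y-c)^2/2 * T1 y - (y - c) * T y" for y
  have dG: "(G has_real_derivative ((y-c)^2/2 * T2 y - T y)) (at y)" for y
  proof -
    have "(G has_real_derivative ((y-c) * T1 y + (y-c)^2/2 * T2 y - (T y + (y - c) * T1 y))) (at y)"
      unfolding G_def[abs_def] by (rule derivative_eq_intros d0 d1 refl | simp)+
    then show ?thesis by (simp add: algebra_simps)
  qed
  have "((\<lambda>y. (y-c)^2/2 * T2 y - T y) has_integral (G B - G A)) {A..B}"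
    by (rule ftc_at[OF AB dG])
  then have i: "((\<lambda>y. (y-c)^2/2 * T2 y - T y) has_integral 0) {A..B}" using e by (simp add: G_def)
  have cT: "continuous_on {A..B} T" using d0 DERIV_isCont by (blast intro: continuous_at_imp_continuous_on)
  have iT: "T integrable_on {A..B}" using cT integrable_continuous_interval by blast
  have iq: "(\<lambda>y. (y-c)^2/2 * T2 y) integrable_on {A..B}"
    using c2 by (intro integrable_continuous_interval continuous_intros) auto
  have "integral {A..B} (\<lambda>y. (y-c)^2/2 * T2 y) - integral {A..B} T = 0"
    using integral_diff[OF iq iT] i integral_unique by metis
  then show ?thesis by simp
qed

context
  fixes d :: real
  assumes d: "d > 0"
begin

lemma rho_int:
  assumes "A \<le> p" "p + d \<le> B"
  shows "((\<lambda>y. rho d (y - p)) has_integral 1) {A..B}"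
proof -
  have "((\<lambda>y. rho d (y - p)) has_integral (Sf d (B - p) - Sf d (A - p))) {A..B}"
  proof (rule ftc_at)
    show "A \<le> B" using assms d by simp
    show "((\<lambda>y. Sf d (y - p)) has_real_derivative rho d (y - p)) (at y)" for y
      by (rule shift_deriv[OF Sf_deriv[OF d]])
  qed
  moreover have "Sf d (B - p) = 1" using assms by (intro Sf_one[OF d]) simp
  moreover have "Sf d (A - p) = 0" using assms by (intro Sf_zero[OF d]) simp
  ultimately show ?thesis by simp
qed

lemma rho_cont: "isCont (rho d) y"
  using DERIV_isCont[OF Drho_deriv[OF d, of 0 y]] by (simp add: Drho0[OF d])

lemma approx:
  fixes F :: "real \<Rightarrow> real"
  assumes cF: "continuous_on {A..B} F" and p: "A \<le> p" "p + d \<le> B"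
    and close: "\<And>y. p \<le> y \<Longrightarrow> y \<le> p + d \<Longrightarrow> \<bar>F y - F p\<bar> \<le> \<eta>"
  shows "\<bar>integral {A..B} (\<lambda>y. F y * rho d (y - p)) - F p\<bar> \<le> \<eta>"
proof -
  have crho: "continuous_on {A..B} (\<lambda>y. rho d (y - p))"
  proof -
    have "continuous_on UNIV (rho d)" using rho_cont by (simp add: continuous_at_imp_continuous_on)
    then show ?thesis by (rule continuous_on_compose2) (auto intro: continuous_intros)
  qed
  have ir: "(\<lambda>y. rho d (y - p)) integrable_on {A..B}" and r1: "integral {A..B} (\<lambda>y. rho d (y - p)) = 1"
    using rho_int[OF p] by (auto simp: has_integral_iff)
  have iF: "(\<lambda>y. F y * rho d (y - p)) integrable_on {A..B}"
    using cF crho by (intro integrable_continuous_interval continuous_intros)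
  have iG: "(\<lambda>y. (F y - F p) * rho d (y - p)) integrable_on {A..B}"
    using cF crho by (intro integrable_continuous_interval continuous_intros)
  have "integral {A..B} (\<lambda>y. (F y - F p) * rho d (y - p)) = integral {A..B} (\<lambda>y. F y * rho d (y - p) - F p * rho d (y - p))"
    by (simp add: algebra_simps)
  also have "\<dots> = integral {A..B} (\<lambda>y. F y * rho d (y - p)) - F p"
    using integral_diff[OF iF integrable_cmul[OF ir, of "F p"]] integral_mult[OF ir, of "F p"] r1 by simp
  finally have eq: "integral {A..B} (\<lambda>y. (F y - F p) * rho d (y - p)) = integral {A..B} (\<lambda>y. F y * rho d (y - p)) - F p" .
  have "norm (integral {A..B} (\<lambda>y. (F y - F p) * rho d (y - p))) \<le> integral {A..B} (\<lambda>y. \<eta> * rho d (y - p))"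
  proof (rule integral_norm_bound_integral[OF iG])
    show "(\<lambda>y. \<eta> * rho d (y - p)) integrable_on {A..B}" using integrable_cmul[OF ir, of \<eta>] by simp
    fix y assume y: "y \<in> {A..B}"
    show "norm ((F y - F p) * rho d (y - p)) \<le> \<eta> * rho d (y - p)"
    proof (cases "0 < y - p \<and> y - p < d")
      case True
      then have "\<bar>F y - F p\<bar> \<le> \<eta>" using close by simp
      then show ?thesis using rho_nonneg[OF d, of "y - p"]
        by (simp add: abs_mult mult_right_mono)
    next
      case False
      then show ?thesis using rho_zero[OF d] by simp
    qed
  qed
  also have "\<dots> = \<eta>" using integral_mult[OF ir, of \<eta>] r1 by simp
  finally show ?thesis using eq by simp
qed

lemma Tf_nonneg:
  assumes h: "h > 0"
  shows "Tf d (c-h) c (c+h) y \<ge> 0"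
proof -
  obtain \<xi> where "Rf d (y-c+h) + Rf d (y-c-h) - 2 * Rf d (y-c) = h^2 * rho d \<xi>"
    using second_diff_mvt[OF h, of "y-c" "Rf d" "Sf d" "rho d"] Rf_deriv[OF d] Sf_deriv[OF d] by blast
  moreover have "h^2 * rho d \<xi> \<ge> 0" using rho_nonneg[OF d] by simp
  ultimately show ?thesis unfolding Tf_def by (simp add: algebra_simps)
qed

lemma Tf_supp:
  assumes h: "h > 0" and y: "y \<notin> {c-h..c+h+d}"
  shows "Tf d (c-h) c (c+h) y = 0"
proof (cases "y < c - h")
  case True
  then show ?thesis unfolding Tf_def using h by (simp add: Rf_zero[OF d])
next
  case False
  then have "y > c + h + d" using y by auto
  then have "Rf d (y-(c-h)) = Rf d d + (y-(c-h) - d)" "Rf d (y-c) = Rf d d + (y-c - d)"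
    "Rf d (y-(c+h)) = Rf d d + (y-(c+h) - d)" using h by (intro Rf_lin[OF d]; simp)+
  then show ?thesis unfolding Tf_def by simp
qed

lemma DT1_ends:
  assumes h: "h > 0"
  shows "Sf d (c-h-(c-h)) - 2*Sf d (c-h-c) + Sf d (c-h-(c+h)) = 0"
    and "Sf d (c+h+d-(c-h)) - 2*Sf d (c+h+d-c) + Sf d (c+h+d-(c+h)) = 0"
  using h d by (simp_all add: Sf_zero[OF d] Sf_one[OF d])

lemma d2_supp:
  assumes h: "h > 0" and y: "y \<notin> {c-h..c+h+d}"
  shows "rho d (y-(c-h)) - 2*rho d (y-c) + rho d (y-(c+h)) = 0"
proof -
  have "rho d (y-(c-h)) = 0" "rho d (y-c) = 0" "rho d (y-(c+h)) = 0"
    using y h by (intro rho_zero[OF d]; auto)+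
  then show ?thesis by simp
qed

end

lemma quad_close:
  fixes p y c h d :: real
  assumes "\<bar>p - c\<bar> \<le> h" "p \<le> y" "y \<le> p + d" "0 < d" "d \<le> h"
  shows "\<bar>(y-c)^2/2 - (p-c)^2/2\<bar> \<le> 2*h*d"
proof -
  have "(y-c)^2 - (p-c)^2 = (y-p)*(y+p-2*c)" by (simp add: power2_eq_square algebra_simps)
  then have e: "(y-c)^2/2 - (p-c)^2/2 = (y-p)*(y+p-2*c)/2" by (simp add: diff_divide_distrib[symmetric])
  have a: "\<bar>y-p\<bar> \<le> d" using assms by simp
  have b: "\<bar>y+p-2*c\<bar> \<le> 3*h" using assms by (simp add: abs_le_iff) 
  have "\<bar>(y-p)*(y+p-2*c)\<bar> \<le> d * (3*h)" unfolding abs_mult using a b by (intro mult_mono) auto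
  moreover have "d * (3*h) \<le> 4*(h*d)" using assms by (simp add: algebra_simps)
  ultimately have "\<bar>(y-p)*(y+p-2*c)\<bar> \<le> 4*(h*d)" by linarith
  then show ?thesis unfolding e by simp
qed

lemma distr_core:
  fixes f g :: "real \<Rightarrow> real"
  assumes D: "distr_super I f g" and cf: "continuous_on I f" and cg: "continuous_on (f ` I) g"
    and h: "h > 0" and box: "{c-h..c+2*h} \<subseteq> I" and kM: "\<forall>y\<in>{c-h..c+2*h}. g (f y) \<le> M"
  shows "f(c+h)+f(c-h)-2*f c \<le> M*h^2"
proof (rule eps_le[where C = "4 + 8*\<bar>M\<bar>*h"])
  show "0 \<le> 4 + 8*\<bar>M\<bar>*h" using h by simp
  fix \<eta> :: real assume \<eta>: "\<eta> > 0"
  have ck: "continuous_on I (\<lambda>x. g (f x))" using continuous_on_compose[OF cf cg] by (simp add: o_def)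
  have pt: "\<exists>e>0. \<forall>y\<in>I. \<bar>y - p\<bar> < e \<longrightarrow> \<bar>f y - f p\<bar> < \<eta>" if "p \<in> I" for p
    using cf that \<eta> unfolding continuous_on_iff dist_real_def by blast
  have inI: "c-h \<in> I" "c \<in> I" "c+h \<in> I" using box h by auto
  obtain e1 where e1: "e1>0" "\<forall>y\<in>I. \<bar>y-(c-h)\<bar> < e1 \<longrightarrow> \<bar>f y - f (c-h)\<bar> < \<eta>" using pt[OF inI(1)] by blast
  obtain e2 where e2: "e2>0" "\<forall>y\<in>I. \<bar>y-c\<bar> < e2 \<longrightarrow> \<bar>f y - f c\<bar> < \<eta>" using pt[OF inI(2)] by blast
  obtain e3 where e3: "e3>0" "\<forall>y\<in>I. \<bar>y-(c+h)\<bar> < e3 \<longrightarrow> \<bar>f y - f (c+h)\<bar> < \<eta>" using pt[OF inI(3)] by blast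
  define d where "d = min (min e1 (min e2 e3)) (min h \<eta>) / 2"
  have d: "d > 0" "d < e1" "d < e2" "d < e3" "d < h" "d \<le> \<eta>" using e1 e2 e3 h \<eta> by (auto simp: d_def)
  define T where "T = Tf d (c-h) c (c+h)"
  define B where "B = c+h+d"
  have ABbox: "{c-h..B} \<subseteq> {c-h..c+2*h}" using d unfolding B_def by auto
  have ABI: "{c-h..B} \<subseteq> I" using ABbox box by blast
  have T0: "T y \<ge> 0" for y unfolding T_def by (rule Tf_nonneg[OF d(1) h])
  have Tsupp: "T y = 0" if "y \<notin> {c-h..B}" for y unfolding T_def using Tf_supp[OF d(1) h] that B_def by blast
  have sub: "{x. T x \<noteq> 0} \<subseteq> {c-h..B}" using Tsupp by blast
  have cl: "closure {x. T x \<noteq> 0} \<subseteq> {c-h..B}" by (rule closure_minimal[OF sub closed_atLeastAtMost])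
  have tf: "test_fun I T" unfolding test_fun_def
  proof (intro conjI)
    show "smooth_on UNIV T" unfolding T_def by (rule Tf_smooth[OF d(1)])
    show "compact (closure {x. T x \<noteq> 0})" using bounded_subset[OF bounded_closed_interval sub] by simp
    show "closure {x. T x \<noteq> 0} \<subseteq> I" using cl ABI by blast
  qed
  have ineq: "integral I (\<lambda>x. f x * deriv (deriv T) x) \<le> integral I (\<lambda>x. g (f x) * T x)"
    using D tf T0 unfolding distr_super_def by blast
  define r2 where "r2 y = rho d (y-(c-h)) - 2*rho d (y-c) + rho d (y-(c+h))" for y
  define S1 where "S1 y = Sf d (y-(c-h)) - 2*Sf d (y-c) + Sf d (y-(c+h))" for y
  have d2: "deriv (deriv T) = r2" unfolding T_def r2_def[abs_def] by (rule Tf_d2[OF d(1)])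
  have dT: "(T has_real_derivative S1 y) (at y)" for y
    using DT_deriv[OF d(1), of "c-h" c "c+h" 0 y] by (simp add: DT_def T_def S1_def[abs_def])
  have dS1: "(S1 has_real_derivative r2 y) (at y)" for y
    using DT_deriv[OF d(1), of "c-h" c "c+h" 1 y] by (simp add: DT_def S1_def[abs_def] r2_def Drho0[OF d(1)])
  have r2supp: "r2 y = 0" if "y \<notin> {c-h..B}" for y
    unfolding r2_def using d2_supp[OF d(1) h, of y c] that B_def by simp
  have crho: "continuous_on S (\<lambda>y. rho d (y - p))" for S p
  proof -
    have "continuous_on UNIV (rho d)" using rho_cont[OF d(1)] by (simp add: continuous_at_imp_continuous_on)
    then show ?thesis by (rule continuous_on_compose2) (auto intro: continuous_intros)
  qed
  have cr2: "continuous_on S r2" for S unfolding r2_def by (intro continuous_intros crho)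
  have cT: "continuous_on S T" for S using dT DERIV_isCont by (blast intro: continuous_at_imp_continuous_on)
  have cfAB: "continuous_on {c-h..B} f" using continuous_on_subset[OF cf ABI] .
  have ckAB: "continuous_on {c-h..B} (\<lambda>x. g (f x))" using continuous_on_subset[OF ck ABI] .
  have intAB: "F integrable_on {c-h..B}" if "continuous_on {c-h..B} F" for F :: "real \<Rightarrow> real"
    using integrable_continuous_interval that by blast
  have L1: "integral I (\<lambda>x. f x * deriv (deriv T) x) = integral {c-h..B} (\<lambda>x. f x * r2 x)"
    unfolding d2
  proof (rule int_superset)
    show "continuous_on {c-h..B} (\<lambda>x. f x * r2 x)" by (rule continuous_on_mult[OF cfAB cr2])
    show "f y * r2 y = 0" if "y \<notin> {c-h..B}" for y using r2supp[OF that] by simp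
  qed (use ABI in auto)
  have split: "integral {c-h..B} (\<lambda>x. F x * r2 x) = integral {c-h..B} (\<lambda>y. F y * rho d (y-(c-h))) - 2 * integral {c-h..B} (\<lambda>y. F y * rho d (y-c)) + integral {c-h..B} (\<lambda>y. F y * rho d (y-(c+h)))"
    if cF: "continuous_on {c-h..B} F" for F
  proof -
    have i1: "(\<lambda>y. F y * rho d (y-(c-h))) integrable_on {c-h..B}" by (rule intAB[OF continuous_on_mult[OF cF crho]])
    have i2: "(\<lambda>y. F y * rho d (y-c)) integrable_on {c-h..B}" by (rule intAB[OF continuous_on_mult[OF cF crho]])
    have i3: "(\<lambda>y. F y * rho d (y-(c+h))) integrable_on {c-h..B}" by (rule intAB[OF continuous_on_mult[OF cF crho]])
    have "integral {c-h..B} (\<lambda>x. F x * r2 x) = integral {c-h..B} (\<lambda>y. (F y * rho d (y-(c-h)) - 2 * (F y * rho d (y-c))) + F y * rho d (y-(c+h)))"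
      by (rule integral_cong) (simp add: r2_def algebra_simps)
    also have "\<dots> = integral {c-h..B} (\<lambda>y. F y * rho d (y-(c-h)) - 2 * (F y * rho d (y-c))) + integral {c-h..B} (\<lambda>y. F y * rho d (y-(c+h)))"
      by (rule integral_add[OF integrable_diff[OF i1 int_cmul[OF i2]] i3])
    also have "integral {c-h..B} (\<lambda>y. F y * rho d (y-(c-h)) - 2 * (F y * rho d (y-c))) = integral {c-h..B} (\<lambda>y. F y * rho d (y-(c-h))) - 2 * integral {c-h..B} (\<lambda>y. F y * rho d (y-c))"
    proof -
      have "integral {c-h..B} (\<lambda>y. F y * rho d (y-(c-h)) - 2 * (F y * rho d (y-c))) = integral {c-h..B} (\<lambda>y. F y * rho d (y-(c-h))) - integral {c-h..B} (\<lambda>y. 2 * (F y * rho d (y-c)))"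
        by (rule integral_diff[OF i1 int_cmul[OF i2]])
      moreover have "integral {c-h..B} (\<lambda>y. 2 * (F y * rho d (y-c))) = 2 * integral {c-h..B} (\<lambda>y. F y * rho d (y-c))"
        by (rule integral_mult[OF i2, symmetric])
      ultimately show ?thesis by simp
    qed
    finally show ?thesis .
  qed
  have apA: "\<bar>integral {c-h..B} (\<lambda>y. F y * rho d (y-(c-h))) - F (c-h)\<bar> \<le> e"
    and apC: "\<bar>integral {c-h..B} (\<lambda>y. F y * rho d (y-c)) - F c\<bar> \<le> e"
    and apB: "\<bar>integral {c-h..B} (\<lambda>y. F y * rho d (y-(c+h))) - F (c+h)\<bar> \<le> e"
    if cF: "continuous_on {c-h..B} F"
      and cl: "\<And>p y. p \<in> {c-h, c, c+h} \<Longrightarrow> p \<le> y \<Longrightarrow> y \<le> p + d \<Longrightarrow> \<bar>F y - F p\<bar> \<le> e" for F e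
  proof -
    show "\<bar>integral {c-h..B} (\<lambda>y. F y * rho d (y-(c-h))) - F (c-h)\<bar> \<le> e"
    proof (rule approx[OF d(1) cF])
      show "c-h \<le> c-h" by simp
      show "c-h+d \<le> B" using h unfolding B_def by simp
      show "\<bar>F y - F (c-h)\<bar> \<le> e" if "c-h \<le> y" "y \<le> c-h+d" for y using cl[of "c-h" y] that by simp
    qed
    show "\<bar>integral {c-h..B} (\<lambda>y. F y * rho d (y-c)) - F c\<bar> \<le> e"
    proof (rule approx[OF d(1) cF])
      show "c-h \<le> c" using h by simp
      show "c+d \<le> B" using h unfolding B_def by simp
      show "\<bar>F y - F c\<bar> \<le> e" if "c \<le> y" "y \<le> c+d" for y using cl[of c y] that by simp
    qed
    show "\<bar>integral {c-h..B} (\<lambda>y. F y * rho d (y-(c+h))) - F (c+h)\<bar> \<le> e"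
    proof (rule approx[OF d(1) cF])
      show "c-h \<le> c+h" using h by simp
      show "c+h+d \<le> B" unfolding B_def by simp
      show "\<bar>F y - F (c+h)\<bar> \<le> e" if "c+h \<le> y" "y \<le> c+h+d" for y using cl[of "c+h" y] that by simp
    qed
  qed
  have fclose: "\<bar>f y - f p\<bar> \<le> \<eta>" if "p \<in> {c-h, c, c+h}" "p \<le> y" "y \<le> p + d" for p y
  proof -
    have "p \<ge> c - h" "p \<le> c + h" using that(1) h by auto
    then have "y \<in> {c-h..B}" using that(2,3) unfolding B_def by auto
    then have yI: "y \<in> I" using ABI by blast
    have yd: "\<bar>y - p\<bar> \<le> d" using that by simp
    from that(1) consider "p = c-h" | "p = c" | "p = c+h" by blast
    then show ?thesis
    proof cases
      case 1 then show ?thesis using e1(2) yI yd d(2) by force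
    next
      case 2 then show ?thesis using e2(2) yI yd d(3) by force
    next
      case 3 then show ?thesis using e3(2) yI yd d(4) by force
    qed
  qed
  have lower: "f(c+h)+f(c-h)-2*f c - 4*\<eta> \<le> integral I (\<lambda>x. f x * deriv (deriv T) x)"
  proof -
    define i1 where "i1 = integral {c-h..B} (\<lambda>y. f y * rho d (y-(c-h)))"
    define i2 where "i2 = integral {c-h..B} (\<lambda>y. f y * rho d (y-c))"
    define i3 where "i3 = integral {c-h..B} (\<lambda>y. f y * rho d (y-(c+h)))"
    have "integral I (\<lambda>x. f x * deriv (deriv T) x) = i1 - 2*i2 + i3"
      unfolding L1 i1_def i2_def i3_def by (rule split[OF cfAB])
    moreover have "\<bar>i1 - f (c-h)\<bar> \<le> \<eta>" "\<bar>i2 - f c\<bar> \<le> \<eta>" "\<bar>i3 - f (c+h)\<bar> \<le> \<eta>"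
      unfolding i1_def i2_def i3_def
      by (rule apA[OF cfAB fclose], assumption+, rule apC[OF cfAB fclose], assumption+, rule apB[OF cfAB fclose], assumption+)
    ultimately show ?thesis by (simp only: abs_le_iff) linarith
  qed
  have R1: "integral I (\<lambda>x. g (f x) * T x) = integral {c-h..B} (\<lambda>x. g (f x) * T x)"
  proof (rule int_superset)
    show "continuous_on {c-h..B} (\<lambda>x. g (f x) * T x)" by (rule continuous_on_mult[OF ckAB cT])
    show "g (f y) * T y = 0" if "y \<notin> {c-h..B}" for y using Tsupp[OF that] by simp
  qed (use ABI in auto)
  have iT: "T integrable_on {c-h..B}" by (rule intAB[OF cT])
  have R2: "integral {c-h..B} (\<lambda>x. g (f x) * T x) \<le> M * integral {c-h..B} T"
  proof -
    have "integral {c-h..B} (\<lambda>x. g (f x) * T x) \<le> integral {c-h..B} (\<lambda>x. M * T x)"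
    proof (rule integral_le)
      show "(\<lambda>x. g (f x) * T x) integrable_on {c-h..B}" by (rule intAB[OF continuous_on_mult[OF ckAB cT]])
      show "(\<lambda>x. M * T x) integrable_on {c-h..B}" by (rule int_cmul[OF iT])
      show "g (f x) * T x \<le> M * T x" if "x \<in> {c-h..B}" for x
      proof -
        have "x \<in> {c-h..c+2*h}" using ABbox that by blast
        then have "g (f x) \<le> M" using kM by blast
        then show ?thesis by (rule mult_right_mono[OF _ T0])
      qed
    qed
    also have "integral {c-h..B} (\<lambda>x. M * T x) = M * integral {c-h..B} T"
      by (rule integral_mult[OF iT, symmetric])
    finally show ?thesis .
  qed
  have BP: "integral {c-h..B} (\<lambda>y. (y-c)^2/2 * r2 y) = integral {c-h..B} T"
  proof (rule by_parts2[OF _ dT dS1 cr2])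
    show "c - h \<le> B" using h d B_def by simp
    show "T (c-h) = 0" unfolding T_def Tf_def using h by (simp add: Rf_zero[OF d(1)])
    show "S1 (c-h) = 0" unfolding S1_def using h by (simp add: Sf_zero[OF d(1)])
    show "S1 B = 0" unfolding S1_def B_def using h d by (simp add: Sf_one[OF d(1)])
    have "Rf d (B-(c-h)) = Rf d d + (B-(c-h) - d)" "Rf d (B-c) = Rf d d + (B-c - d)"
      "Rf d (B-(c+h)) = Rf d d + (B-(c+h) - d)" using h unfolding B_def by (intro Rf_lin[OF d(1)]; simp)+
    then show "T B = 0" unfolding T_def Tf_def by simp
  qed
  have cq: "continuous_on {c-h..B} (\<lambda>y. (y-c)^2/2)" by (intro continuous_intros) auto
  have qclose: "\<bar>(y-c)^2/2 - (p-c)^2/2\<bar> \<le> 2*h*d" if "p \<in> {c-h, c, c+h}" "p \<le> y" "y \<le> p + d" for p y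
    by (rule quad_close) (use that h d in auto)
  have Tint: "\<bar>integral {c-h..B} T - h^2\<bar> \<le> 8*h*d"
  proof -
    define i1 where "i1 = integral {c-h..B} (\<lambda>y. (y-c)^2/2 * rho d (y-(c-h)))"
    define i2 where "i2 = integral {c-h..B} (\<lambda>y. (y-c)^2/2 * rho d (y-c))"
    define i3 where "i3 = integral {c-h..B} (\<lambda>y. (y-c)^2/2 * rho d (y-(c+h)))"
    have "integral {c-h..B} T = i1 - 2*i2 + i3"
      unfolding BP[symmetric] i1_def i2_def i3_def by (rule split[OF cq])
    moreover have "\<bar>i1 - (c-h-c)^2/2\<bar> \<le> 2*h*d" "\<bar>i2 - (c-c)^2/2\<bar> \<le> 2*h*d" "\<bar>i3 - (c+h-c)^2/2\<bar> \<le> 2*h*d"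
      unfolding i1_def i2_def i3_def
      by (rule apA[OF cq qclose], assumption+, rule apC[OF cq qclose], assumption+, rule apB[OF cq qclose], assumption+)
    moreover have "(c-h-c)^2/2 = h^2/2" "(c-c)^2/2 = (0::real)" "(c+h-c)^2/2 = h^2/2" by (simp_all add: power2_eq_square)
    ultimately show ?thesis by (simp only: abs_le_iff) linarith
  qed
  have "M * integral {c-h..B} T \<le> M*h^2 + \<bar>M\<bar> * (8*h*d)"
  proof -
    have "M * (integral {c-h..B} T - h^2) \<le> \<bar>M\<bar> * \<bar>integral {c-h..B} T - h^2\<bar>"
      by (metis abs_ge_self abs_mult)
    also have "\<dots> \<le> \<bar>M\<bar> * (8*h*d)" using Tint by (intro mult_left_mono) auto
    finally show ?thesis by (simp add: algebra_simps)
  qed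
  also have "\<bar>M\<bar> * (8*h*d) \<le> \<bar>M\<bar> * (8*h*\<eta>)" using d h by (intro mult_left_mono) auto
  finally have upper: "integral I (\<lambda>x. g (f x) * T x) \<le> M*h^2 + \<bar>M\<bar> * (8*h*\<eta>)" using R1 R2 by simp
  show "f(c+h)+f(c-h)-2*f c \<le> M*h^2 + \<eta> * (4 + 8*\<bar>M\<bar>*h)"
    using lower ineq upper by (simp add: algebra_simps)
qed

lemma distr_D3:
  fixes f g :: "real \<Rightarrow> real"
  assumes D: "distr_super I f g" and oI: "open I" and cf: "continuous_on I f" and cg: "continuous_on (f ` I) g"
    and x: "x \<in> I"
  shows "upper_D2 f x \<le> ereal (g (f x))"
proof (rule ereal_le_epsilon2)
  fix \<epsilon> :: real assume e: "0 < \<epsilon>"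
  let ?k = "\<lambda>x. g (f x)"
  have ck: "continuous_on I ?k" using continuous_on_compose[OF cf cg] by (simp add: o_def)
  obtain r where r: "r > 0" "ball x r \<subseteq> I" "\<forall>y. \<bar>y - x\<bar> < r \<longrightarrow> \<bar>?k y - ?k x\<bar> < \<epsilon>"
    using loc[OF oI ck x e] by blast
  have "eventually (\<lambda>t. ereal ((f (x + t) + f (x - t) - 2 * f x) / t\<^sup>2) \<le> ereal (?k x + \<epsilon>)) (at_right 0)"
    unfolding eventually_at_right_field
  proof (intro exI[of _ "r/3"] conjI allI impI)
    show "0 < r/3" using r by simp
    fix t :: real assume t: "0 < t" "t < r/3"
    have sub: "{x-t..x+2*t} \<subseteq> I" using r t by (force simp: ball_def dist_real_def)
    have "\<forall>y\<in>{x-t..x+2*t}. ?k y \<le> ?k x + \<epsilon>"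
    proof
      fix y assume "y \<in> {x-t..x+2*t}"
      then have "\<bar>y - x\<bar> < r" using t by auto
      then show "?k y \<le> ?k x + \<epsilon>" using r(3) by force
    qed
    then have "f(x+t)+f(x-t)-2*f x \<le> (?k x + \<epsilon>)*t^2"
      using distr_core[OF D cf cg t(1) sub] by blast
    then show "ereal ((f (x + t) + f (x - t) - 2 * f x) / t\<^sup>2) \<le> ereal (?k x + \<epsilon>)"
      using t by (simp add: field_simps)
  qed
  then have "upper_D2 f x \<le> ereal (?k x + \<epsilon>)" unfolding upper_D2_def by (rule Limsup_bounded)
  then show "upper_D2 f x \<le> ereal (?k x) + ereal \<epsilon>" by simp
qed

theorem propositionA3:
  fixes I :: "real set" and f g :: "real \<Rightarrow> real"
  assumes "open I" and "is_interval I" and "I \<noteq> {}"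
    and "continuous_on I f" and "bdd_below (f ` I)"
    and "continuous_on (f ` I) g"
  shows "(visc_super I f g \<longleftrightarrow> distr_super I f g)
       \<and> (distr_super I f g \<longleftrightarrow> (\<forall>x\<in>I. upper_D2 f x \<le> ereal (g (f x))))"
proof -
  note oI = assms(1) and iI = assms(2) and cf = assms(4) and cg = assms(6)
  have ck: "continuous_on I (\<lambda>x. g (f x))" using continuous_on_compose[OF cf cg] by (simp add: o_def)
  have P2D: "distr_super I f g" if P: "Pprop I f (\<lambda>x. g (f x))"
    unfolding distr_super_def
  proof (intro allI impI, elim conjE)
    fix \<phi> assume "test_fun I \<phi>" "\<forall>x. 0 \<le> \<phi> x"
    then show "integral I (\<lambda>x. f x * deriv (deriv \<phi>) x) \<le> integral I (\<lambda>x. g (f x) * \<phi> x)"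
      using P_distr[OF P oI iI cf ck] by blast
  qed
  have D23: "\<forall>x\<in>I. upper_D2 f x \<le> ereal (g (f x))" if "distr_super I f g"
    using distr_D3[OF that oI cf cg] by blast
  have V2P: "Pprop I f (\<lambda>x. g (f x))" if "visc_super I f g" using visc_P[OF that cf] .
  have P2V: "visc_super I f g" if "Pprop I f (\<lambda>x. g (f x))" using P_visc[OF that oI ck] .
  have D32P: "Pprop I f (\<lambda>x. g (f x))" if "\<forall>x\<in>I. upper_D2 f x \<le> ereal (g (f x))"
    using D3_P[OF that cf] .
  show ?thesis using P2D D23 V2P P2V D32P by blast
qed

end
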